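(* Let $\mathcal A$ be a well-structured abstract domain with functions $(\alpha,\gamma)$, and let monotone abstract operators $\llbracket e\rrbracket^\#:\mathcal A\to\mathcal A$ be given for each basic command $e$. If $\llbracket e\rrbracket^\#$ is a complete abstraction of $\llbracket e\rrbracket$ for every basic command $e$, then the induced incorrectness proof system described in the context is sound and relatively complete: for all $a,b\in\mathcal A$ and programs $S$, $\vdash_{\mathrm{in}}[a]\,S\,[b]$ iff $\models_{\mathrm{in}}[a]\,S\,[b]$.
   Context: Fix a finite set $V$ of quantum variables, each a qubit with state space $\mathcal H_q\cong\mathbb C^2$; for $W\subseteq V$, $\mathcal H_W=\bigotimes_{q\in W}\mathcal H_q$. Operators and subspaces on $\mathcal H_W$ are identified with their cylindrical extensions to $\mathcal H_V$, and a subspace is identified with its orthogonal projector; $P^\perp$ is the orthocomplement. $\mathcal D(\mathcal H_V)$ is the set of partial density operators (positive, trace $\le1$). Programs: $S::=\mathbf{skip}\mid \bar q:=|0\rangle\mid \bar q\mathrel{*{=}}U\mid \mathbf{assert}\ P[\bar q]\mid S_0;S_1\mid \mathbf{if}\ P[\bar q]\ \mathbf{then}\ S_1\ \mathbf{else}\ S_0\ \mathbf{end}\mid\mathbf{while}\ P[\bar q]\ \mathbf{do}\ S\ \mathbf{end}$, with $\bar q=q_1,\dots,q_t$ distinct variables, $U$ unitary on $\mathcal H_{\bar q}$, $P$ a subspace of $\mathcal H_{\bar q}$; the first four forms are the basic commands. Semantics $\llbracket S\rrbracket:\mathcal D(\mathcal H_V)\to\mathcal D(\mathcal H_V)$: $\llbracket\mathbf{skip}\rrbracket(\rho)=\rho$;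 $\llbracket\bar q:=|0\rangle\rrbracket(\rho)=\sum_{i=0}^{2^t-1}|0\rangle_{\bar q}\langle i|\rho|i\rangle_{\bar q}\langle0|$; $\llbracket\bar q\mathrel{*{=}}U\rrbracket(\rho)=U\rho U^\dagger$; $\llbracket\mathbf{assert}\ P[\bar q]\rrbracket(\rho)=P\rho P$; $\llbracket S_0;S_1\rrbracket=\llbracket S_1\rrbracket\circ\llbracket S_0\rrbracket$; $\llbracket\mathbf{if}\ P[\bar q]\ \mathbf{then}\ S_1\ \mathbf{else}\ S_0\ \mathbf{end}\rrbracket(\rho)=\llbracket\mathbf{assert}\ P[\bar q];S_1\rrbracket(\rho)+\llbracket\mathbf{assert}\ P^\perp[\bar q];S_0\rrbracket(\rho)$; $\llbracket\mathbf{while}\ P[\bar q]\ \mathbf{do}\ S\ \mathbf{end}\rrbracket(\rho)=\sum_{i\ge0}\llbracket(\mathbf{assert}\ P[\bar q];S)^i;\mathbf{assert}\ P^\perp[\bar q]\rrbracket(\rho)$, where $T^i$ is $i$-fold sequential composition ($T^0=\mathbf{skip}$). The concrete domain is $\mathcal Q=2^{\mathcal D(\mathcal H_V)}$ ordered by inclusion, and $\llbracket S\rrbracket(R)=\{\llbracket S\rrbracket(\rho):\rho\in R\}$. A pair of monotone maps $(\alpha,\gamma)$ between posets is a Galois connection if $c\le\gamma(a)\iff\alpha(c)\le a$, and a Galois embedding if moreover $\alpha\circ\gamma=\mathrm{id}$. A complete lattice $(\mathcal A,\le_{\mathcal A},\vee,\wedge,\bot,\top)$ with monotone $\alpha:\mathcal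 Q\to\mathcal A$, $\gamma:\mathcal A\to\mathcal Q$ is a well-structured abstract domain if (a) $(\alpha,\gamma)$ is a Galois embedding, and (b) for any family $\rho_i\in\mathcal D(\mathcal H_V)$ and reals $x_i>0$ with $\sum_i x_i\rho_i\in\mathcal D(\mathcal H_V)$, $\alpha(\sum_i x_i\rho_i)=\bigvee_i\alpha(\rho_i)$, where $\alpha(\rho)=\alpha(\{\rho\})$. $f^\#$ is a complete abstraction of $f:\mathcal Q\to\mathcal Q$ if $\alpha\circ f=f^\#\circ\alpha$. The best abstraction of $\llbracket S\rrbracket$ is $\llbracket S\rrbracket^b=\alpha\circ\llbracket S\rrbracket\circ\gamma$. Induced incorrectness system: assertions are elements of $\mathcal A$; $\models_{\mathrm{in}}[a]\,S\,[b]$ iff $b\le_{\mathcal A}\llbracket S\rrbracket^b(a)$. Derivability $\vdash_{\mathrm{in}}$ is w.r.t. the rules: (Exp-In) $[a]\,e\,[\llbracket e\rrbracket^\#(a)]$ for every basic command $e$; (Seq-In) from $[a]\,S_0\,[a']$ and $[a']\,S_1\,[b]$ infer $[a]\,S_0;S_1\,[b]$; (Imp-In) from $a'\le_{\mathcal A}a$, $[a']\,S\,[b']$, $b\le_{\mathcal A}b'$ infer $[a]\,S\,[b]$; (Meas-In) from $[a]\,\mathbf{assert}\ P[\bar q];S_1\,[b_1]$ and $[a]\,\mathbf{assert}\ P^\perp[\bar q];S_0\,[b_0]$ infer $[a]\,\mathbf{if}\ P[\bar q]\ \mathbf{then}\ S_1\ \mathbf{else}\ S_0\ \mathbf{end}\,[b_0\vee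 b_1]$; (While-In) from $[a_i]\,\mathbf{assert}\ P[\bar q];S\,[a_{i+1}]$ and $[a_i]\,\mathbf{assert}\ P^\perp[\bar q]\,[b_i]$ for all $i\ge0$ infer $[a_0]\,\mathbf{while}\ P[\bar q]\ \mathbf{do}\ S\ \mathbf{end}\,[\bigvee_{i\ge0}b_i]$. *)

theory Defs
  imports Complex_Main "Jordan_Normal_Form.Matrix"
begin

text \<open>Quantum variables are the qubits 0,...,n-1, i.e. V = {0..<n}.  The state space
  H_V is identified with complex column vectors of dimension 2^n, basis index i
  encoding the bit string with qubit k equal to bit k of i.\<close>

definition adj :: "complex mat \<Rightarrow> complex mat" where
  "adj A = mat (dim_col A) (dim_row A) (\<lambda>(i,j). cnj (A $$ (j,i)))"

definition mtrace :: "complex mat \<Rightarrow> complex" where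
  "mtrace A = (\<Sum>i<dim_row A. A $$ (i,i))"

definition positive_op :: "nat \<Rightarrow> complex mat \<Rightarrow> bool" where
  "positive_op d A \<longleftrightarrow> A \<in> carrier_mat d d \<and>
     (\<forall>v :: nat \<Rightarrow> complex.
        let z = (\<Sum>i<d. \<Sum>j<d. cnj (v i) * A $$ (i,j) * v j) in Im z = 0 \<and> Re z \<ge> 0)"

definition Dens :: "nat \<Rightarrow> complex mat set" where
  "Dens n = {\<rho>. positive_op (2^n) \<rho> \<and> Re (mtrace \<rho>) \<le> 1}"

definition unitary_op :: "nat \<Rightarrow> complex mat \<Rightarrow> bool" where
  "unitary_op d U \<longleftrightarrow> U \<in> carrier_mat d d \<and> U * adj U = 1\<^sub>m d \<and> adj U * U = 1\<^sub>m d"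

text \<open>subspaces are identified with their orthogonal projectors\<close>
definition projector :: "nat \<Rightarrow> complex mat \<Rightarrow> bool" where
  "projector d P \<longleftrightarrow> P \<in> carrier_mat d d \<and> P * P = P \<and> adj P = P"

definition perp :: "nat list \<Rightarrow> complex mat \<Rightarrow> complex mat" where
  "perp qs P = 1\<^sub>m (2 ^ length qs) - P"

definition bitv :: "nat \<Rightarrow> nat \<Rightarrow> bool" where
  "bitv i k \<longleftrightarrow> odd (i div 2 ^ k)"

text \<open>index in H_{qs} (q_1 most significant) of the restriction of basis index i\<close>
definition loc :: "nat list \<Rightarrow> nat \<Rightarrow> nat" where
  "loc qs i = (\<Sum>m<length qs. if bitv i (qs ! m) then 2 ^ (length qs - 1 - m) else 0)"

text \<open>cylindrical extension A \<otimes> I of an operator A on H_{qs} to H_V\<close>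
definition ext :: "nat \<Rightarrow> nat list \<Rightarrow> complex mat \<Rightarrow> complex mat" where
  "ext n qs A = mat (2^n) (2^n) (\<lambda>(i,j).
      if (\<forall>k<n. k \<notin> set qs \<longrightarrow> bitv i k = bitv j k) then A $$ (loc qs i, loc qs j) else 0)"

definition ket0bra :: "nat list \<Rightarrow> nat \<Rightarrow> complex mat" where
  "ket0bra qs i = mat (2 ^ length qs) (2 ^ length qs) (\<lambda>(a,b). if a = 0 \<and> b = i then 1 else 0)"

definition msuminf :: "nat \<Rightarrow> (nat \<Rightarrow> complex mat) \<Rightarrow> complex mat" where
  "msuminf d f = mat d d (\<lambda>(a,b). \<Sum>k. f k $$ (a,b))"

datatype prog =
    Skip
  | Init "nat list"
  | Unit "nat list" "complex mat"
  | Assert "nat list" "complex mat"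
  | Seq prog prog
  | If "nat list" "complex mat" prog prog   \<comment> \<open>If qs P S1 S0 = if P[qs] then S1 else S0 end\<close>
  | While "nat list" "complex mat" prog

fun basic :: "prog \<Rightarrow> bool" where
  "basic Skip = True"
| "basic (Init qs) = True"
| "basic (Unit qs U) = True"
| "basic (Assert qs P) = True"
| "basic _ = False"

definition wf_reg :: "nat \<Rightarrow> nat list \<Rightarrow> bool" where
  "wf_reg n qs \<longleftrightarrow> qs \<noteq> [] \<and> distinct qs \<and> set qs \<subseteq> {..<n}"

fun wf_prog :: "nat \<Rightarrow> prog \<Rightarrow> bool" where
  "wf_prog n Skip = True"
| "wf_prog n (Init qs) = wf_reg n qs"
| "wf_prog n (Unit qs U) = (wf_reg n qs \<and> unitary_op (2 ^ length qs) U)"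
| "wf_prog n (Assert qs P) = (wf_reg n qs \<and> projector (2 ^ length qs) P)"
| "wf_prog n (Seq S0 S1) = (wf_prog n S0 \<and> wf_prog n S1)"
| "wf_prog n (If qs P S1 S0) = (wf_reg n qs \<and> projector (2 ^ length qs) P \<and> wf_prog n S1 \<and> wf_prog n S0)"
| "wf_prog n (While qs P S) = (wf_reg n qs \<and> projector (2 ^ length qs) P \<and> wf_prog n S)"

definition assert_op :: "nat \<Rightarrow> nat list \<Rightarrow> complex mat \<Rightarrow> complex mat \<Rightarrow> complex mat" where
  "assert_op n qs P \<rho> = ext n qs P * \<rho> * ext n qs P"

fun sem :: "nat \<Rightarrow> prog \<Rightarrow> complex mat \<Rightarrow> complex mat" where
  "sem n Skip \<rho> = \<rho>"
| "sem n (Init qs) \<rho> =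
     foldr (\<lambda>i M. ext n qs (ket0bra qs i) * \<rho> * adj (ext n qs (ket0bra qs i)) + M)
       [0..<2 ^ length qs] (0\<^sub>m (2^n) (2^n))"
| "sem n (Unit qs U) \<rho> = ext n qs U * \<rho> * adj (ext n qs U)"
| "sem n (Assert qs P) \<rho> = assert_op n qs P \<rho>"
| "sem n (Seq S0 S1) \<rho> = sem n S1 (sem n S0 \<rho>)"
| "sem n (If qs P S1 S0) \<rho> =
     sem n S1 (assert_op n qs P \<rho>) + sem n S0 (assert_op n qs (perp qs P) \<rho>)"
| "sem n (While qs P S) \<rho> =
     msuminf (2^n) (\<lambda>i. assert_op n qs (perp qs P) (((\<lambda>\<sigma>. sem n S (assert_op n qs P \<sigma>)) ^^ i) \<rho>))"

definition semQ :: "nat \<Rightarrow> prog \<Rightarrow> complex mat set \<Rightarrow> complex mat set" where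
  "semQ n S R = sem n S ` R"

text \<open>well-structured abstract domain: complete lattice 'a with a Galois embedding
  between Q = Pow (Dens n) and 'a, plus condition (b) for countable families.\<close>
definition well_structured ::
  "nat \<Rightarrow> (complex mat set \<Rightarrow> 'a::complete_lattice) \<Rightarrow> ('a \<Rightarrow> complex mat set) \<Rightarrow> bool" where
  "well_structured n \<alpha> \<gamma> \<longleftrightarrow>
     (\<forall>a. \<gamma> a \<subseteq> Dens n) \<and>
     (\<forall>R1 R2. R1 \<subseteq> R2 \<and> R2 \<subseteq> Dens n \<longrightarrow> \<alpha> R1 \<le> \<alpha> R2) \<and>
     mono \<gamma> \<and>
     (\<forall>R a. R \<subseteq> Dens n \<longrightarrow> (R \<subseteq> \<gamma> a \<longleftrightarrow> \<alpha> R \<le> a)) \<and>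
     (\<forall>a. \<alpha> (\<gamma> a) = a) \<and>
     (\<forall>(I :: nat set) (\<rho> :: nat \<Rightarrow> complex mat) (x :: nat \<Rightarrow> real).
        I \<noteq> {} \<and> (\<forall>i\<in>I. \<rho> i \<in> Dens n \<and> x i > 0) \<and>
        (\<forall>a<2^n. \<forall>b<2^n. summable (\<lambda>i. if i \<in> I then complex_of_real (x i) * \<rho> i $$ (a,b) else 0)) \<and>
        msuminf (2^n) (\<lambda>i. if i \<in> I then complex_of_real (x i) \<cdot>\<^sub>m \<rho> i else 0\<^sub>m (2^n) (2^n)) \<in> Dens n
        \<longrightarrow> \<alpha> {msuminf (2^n) (\<lambda>i. if i \<in> I then complex_of_real (x i) \<cdot>\<^sub>m \<rho> i else 0\<^sub>m (2^n) (2^n))}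
            = (SUP i\<in>I. \<alpha> {\<rho> i}))"

definition best_abs :: "nat \<Rightarrow> (complex mat set \<Rightarrow> 'a) \<Rightarrow> ('a \<Rightarrow> complex mat set) \<Rightarrow> prog \<Rightarrow> 'a \<Rightarrow> 'a" where
  "best_abs n \<alpha> \<gamma> S a = \<alpha> (semQ n S (\<gamma> a))"

definition valid_in :: "nat \<Rightarrow> (complex mat set \<Rightarrow> 'a::complete_lattice) \<Rightarrow> ('a \<Rightarrow> complex mat set)
    \<Rightarrow> 'a \<Rightarrow> prog \<Rightarrow> 'a \<Rightarrow> bool" where
  "valid_in n \<alpha> \<gamma> a S b \<longleftrightarrow> b \<le> best_abs n \<alpha> \<gamma> S a"

definition complete_abs :: "nat \<Rightarrow> (complex mat set \<Rightarrow> 'a) \<Rightarrow> prog \<Rightarrow> ('a \<Rightarrow> 'a) \<Rightarrow> bool" where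
  "complete_abs n \<alpha> e f \<longleftrightarrow> (\<forall>R. R \<subseteq> Dens n \<longrightarrow> \<alpha> (semQ n e R) = f (\<alpha> R))"

inductive derivable_in :: "(prog \<Rightarrow> 'a::complete_lattice \<Rightarrow> 'a) \<Rightarrow> 'a \<Rightarrow> prog \<Rightarrow> 'a \<Rightarrow> bool"
  for absop where
  ExpIn: "basic e \<Longrightarrow> derivable_in absop a e (absop e a)"
| SeqIn: "derivable_in absop a S0 a' \<Longrightarrow> derivable_in absop a' S1 b \<Longrightarrow>
          derivable_in absop a (Seq S0 S1) b"
| ImpIn: "a' \<le> a \<Longrightarrow> derivable_in absop a' S b' \<Longrightarrow> b \<le> b' \<Longrightarrow> derivable_in absop a S b"
| MeasIn: "derivable_in absop a (Seq (Assert qs P) S1) b1 \<Longrightarrow>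
           derivable_in absop a (Seq (Assert qs (perp qs P)) S0) b0 \<Longrightarrow>
           derivable_in absop a (If qs P S1 S0) (sup b0 b1)"
| WhileIn: "(\<forall>i. derivable_in absop (as i) (Seq (Assert qs P) S) (as (Suc i)) \<and>
                derivable_in absop (as i) (Assert qs (perp qs P)) (bs i)) \<Longrightarrow>
            derivable_in absop (as 0) (While qs P S) (SUP i. bs i)"

end

theory Submission
  imports Defs
begin


lemma bitv_bit: "bitv i k = bit i k"
  by (simp add: bitv_def bit_iff_odd)

lemma bits_eq_lt:
  fixes x y :: nat
  assumes "x < 2^n" "y < 2^n" "\<And>k. k < n \<Longrightarrow> bit x k = bit y k"
  shows "x = y"
proof -
  have "bit x k = bit y k" for k
  proof -
    have "bit x k = bit (take_bit n x) k" using assms(1) by (simp add: take_bit_nat_eq_self)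
    moreover have "bit y k = bit (take_bit n y) k" using assms(2) by (simp add: take_bit_nat_eq_self)
    ultimately show "bit x k = bit y k" using assms(3) by (auto simp: bit_take_bit_iff)
  qed
  then show ?thesis by (simp add: bit_eq_iff)
qed

lemma loc_horner:
  "loc qs i = horner_sum of_bool 2 (map (\<lambda>p. bit i (qs ! (length qs - 1 - p))) [0..<length qs])"
proof -
  let ?t = "length qs"
  have "loc qs i = (\<Sum>m<?t. of_bool (bit i (qs ! m)) * 2 ^ (?t - 1 - m))"
    unfolding loc_def by (intro sum.cong) (auto simp: bitv_bit)
  also have "\<dots> = (\<Sum>p<?t. of_bool (bit i (qs ! (?t - 1 - p))) * 2 ^ p)"
  proof -
    have "(\<Sum>p<?t. of_bool (bit i (qs ! (?t - 1 - p))) * (2::nat) ^ p)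
        = (\<Sum>p<?t. (\<lambda>m. of_bool (bit i (qs ! m)) * 2 ^ (?t - 1 - m)) (?t - Suc p))"
      by (intro sum.cong) auto
    also have "\<dots> = (\<Sum>m<?t. of_bool (bit i (qs ! m)) * 2 ^ (?t - 1 - m))"
      by (rule sum.reindex_bij_witness[where i="\<lambda>p. ?t - Suc p" and j="\<lambda>p. ?t - Suc p"]) auto
    finally show ?thesis by simp
  qed
  also have "\<dots> = horner_sum of_bool 2 (map (\<lambda>p. bit i (qs ! (?t - 1 - p))) [0..<?t])"
    by (simp add: horner_sum_eq_sum atLeast0LessThan)
  finally show ?thesis .
qed

lemma bit_loc: "bit (loc qs i) p \<longleftrightarrow> p < length qs \<and> bit i (qs ! (length qs - 1 - p))"
  unfolding loc_horner by (auto simp: bit_horner_sum_bit_iff)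

lemma loc_lt: "loc qs i < 2 ^ length qs"
  unfolding loc_horner using horner_sum_bound[where bs="map (\<lambda>p. bit i (qs ! (length qs - 1 - p))) [0..<length qs]"]
  by simp

definition sim :: "nat \<Rightarrow> nat list \<Rightarrow> nat \<Rightarrow> nat \<Rightarrow> bool" where
  "sim n qs i j \<longleftrightarrow> (\<forall>k<n. k \<notin> set qs \<longrightarrow> bit i k = bit j k)"

lemma sim_refl: "sim n qs i i" by (simp add: sim_def)
lemma sim_sym: "sim n qs i j \<Longrightarrow> sim n qs j i" by (simp add: sim_def)
lemma sim_trans: "sim n qs i j \<Longrightarrow> sim n qs j k \<Longrightarrow> sim n qs i k" by (simp add: sim_def)

lemma ext_index:
  "i < 2^n \<Longrightarrow> j < 2^n \<Longrightarrow> ext n qs A $$ (i,j) = (if sim n qs i j then A $$ (loc qs i, loc qs j) else 0)"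
  by (simp add: ext_def sim_def bitv_bit)

lemma ext_carrier[simp]: "ext n qs A \<in> carrier_mat (2^n) (2^n)"
  by (simp add: ext_def)
lemma ext_dims[simp]: "dim_row (ext n qs A) = 2^n" "dim_col (ext n qs A) = 2^n"
  by (simp_all add: ext_def)

definition enc :: "nat \<Rightarrow> nat list \<Rightarrow> nat \<Rightarrow> nat \<Rightarrow> nat" where
  "enc n qs i c = horner_sum of_bool 2
     (map (\<lambda>m. (\<exists>j<length qs. qs ! j = m \<and> bit c (length qs - 1 - j)) \<or> (m \<notin> set qs \<and> bit i m)) [0..<n])"

lemma enc_lt: "enc n qs i c < 2^n"
  unfolding enc_def using horner_sum_bound[where bs="map (\<lambda>m. (\<exists>j<length qs. qs ! j = m \<and> bit c (length qs - 1 - j)) \<or> (m \<notin> set qs \<and> bit i m)) [0..<n]"]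
  by simp

lemma bit_enc: "bit (enc n qs i c) m \<longleftrightarrow> m < n \<and> ((\<exists>j<length qs. qs ! j = m \<and> bit c (length qs - 1 - j)) \<or> (m \<notin> set qs \<and> bit i m))"
  unfolding enc_def by (auto simp: bit_horner_sum_bit_iff)

lemma sim_enc: "sim n qs (enc n qs i c) i"
  using nth_mem by (fastforce simp: sim_def bit_enc)

lemma loc_enc:
  assumes "wf_reg n qs" "c < 2 ^ length qs"
  shows "loc qs (enc n qs i c) = c"
proof (rule bits_eq_lt[OF loc_lt assms(2)])
  fix p assume p: "p < length qs"
  let ?m = "qs ! (length qs - 1 - p)"
  have mq: "?m \<in> set qs" using p by auto
  have mn: "?m < n" using mq assms(1) unfolding wf_reg_def by blast
  have d: "distinct qs" using assms(1) by (simp add: wf_reg_def)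
  have "(\<exists>j<length qs. qs ! j = ?m \<and> bit c (length qs - 1 - j)) \<longleftrightarrow> bit c p"
  proof
    assume "\<exists>j<length qs. qs ! j = ?m \<and> bit c (length qs - 1 - j)"
    then obtain j where "j < length qs" "qs ! j = ?m" "bit c (length qs - 1 - j)" by blast
    moreover have "j = length qs - 1 - p" using nth_eq_iff_index_eq[OF d] p calculation by auto
    ultimately show "bit c p" using p by simp
  next
    assume "bit c p" then show "\<exists>j<length qs. qs ! j = ?m \<and> bit c (length qs - 1 - j)"
      using p by (intro exI[of _ "length qs - 1 - p"]) auto
  qed
  then show "bit (loc qs (enc n qs i c)) p = bit c p"
    using p mq mn by (simp add: bit_loc bit_enc)
qed

lemma loc_inj:
  assumes "wf_reg n qs" "k < 2^n" "k' < 2^n" "sim n qs k k'" "loc qs k = loc qs k'"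
  shows "k = k'"
proof (rule bits_eq_lt[OF assms(2,3)])
  fix m assume m: "m < n"
  show "bit k m = bit k' m"
  proof (cases "m \<in> set qs")
    case True
    then obtain j where j: "j < length qs" "qs ! j = m" by (auto simp: in_set_conv_nth)
    have "bit (loc qs k) (length qs - 1 - j) = bit (loc qs k') (length qs - 1 - j)" using assms(5) by simp
    moreover have "length qs - 1 - (length qs - 1 - j) = j" using j by simp
    moreover have "length qs - Suc j < length qs" using j by simp
    ultimately show ?thesis using j by (simp add: bit_loc)
  next
    case False then show ?thesis using assms(4) m by (simp add: sim_def)
  qed
qed

lemma loc_bij:
  assumes "wf_reg n qs" "i < 2^n"
  shows "bij_betw (loc qs) {k. k < 2^n \<and> sim n qs i k} {..<2 ^ length qs}"
proof (rule bij_betwI'[where X="{k. k < 2^n \<and> sim n qs i k}"])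
  fix x y assume "x \<in> {k. k < 2^n \<and> sim n qs i k}" "y \<in> {k. k < 2^n \<and> sim n qs i k}"
  show "(loc qs x = loc qs y) = (x = y)"
    proof
    assume "loc qs x = loc qs y"
    moreover have "sim n qs x y" using \<open>x \<in> _\<close> \<open>y \<in> _\<close> by (auto intro: sim_trans[OF sim_sym])
    ultimately show "x = y" using loc_inj[OF assms(1)] \<open>x \<in> _\<close> \<open>y \<in> _\<close> by auto
  qed simp
next
  fix x show "loc qs x \<in> {..<2 ^ length qs}" using loc_lt by simp
next
  fix c :: nat assume "c \<in> {..<2 ^ length qs}"
  then show "\<exists>x\<in>{k. k < 2 ^ n \<and> sim n qs i k}. c = loc qs x"
    proof (intro bexI[of _ "enc n qs i c"])
    show "c = loc qs (enc n qs i c)" using loc_enc[OF assms(1)] \<open>c \<in> _\<close> by simp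
    show "enc n qs i c \<in> {k. k < 2 ^ n \<and> sim n qs i k}" using enc_lt sim_sym[OF sim_enc] by simp
  qed
qed

lemma mult_entry:
  assumes "A \<in> carrier_mat d m" "B \<in> carrier_mat m e" "i < d" "j < e"
  shows "(A * B) $$ (i,j) = (\<Sum>k<m. A $$ (i,k) * B $$ (k,j))"
  using assms unfolding index_mult_mat(1)[OF assms(3)[folded carrier_matD(1)[OF assms(1)]] assms(4)[folded carrier_matD(2)[OF assms(2)]]]
  by (auto simp: scalar_prod_def atLeast0LessThan intro!: sum.cong)

lemma ext_mult:
  assumes wf: "wf_reg n qs" and A: "A \<in> carrier_mat (2 ^ length qs) (2 ^ length qs)"
    and B: "B \<in> carrier_mat (2 ^ length qs) (2 ^ length qs)"
  shows "ext n qs A * ext n qs B = ext n qs (A * B)"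
proof (rule eq_matI)
  fix i j assume i: "i < dim_row (ext n qs (A * B))" and j: "j < dim_col (ext n qs (A * B))"
  then have i: "i < 2^n" and j: "j < 2^n" by auto
  let ?K = "{k. k < 2^n \<and> sim n qs i k}"
  have "(ext n qs A * ext n qs B) $$ (i,j) = (\<Sum>k<2^n. ext n qs A $$ (i,k) * ext n qs B $$ (k,j))"
    by (rule mult_entry[OF ext_carrier ext_carrier i j])
  also have "\<dots> = (\<Sum>k<2^n. if sim n qs i k \<and> sim n qs i j then A $$ (loc qs i, loc qs k) * B $$ (loc qs k, loc qs j) else 0)"
  proof (intro sum.cong refl)
    fix k :: nat assume k: "k \<in> {..<2^n}"
    have "(sim n qs i k \<and> sim n qs k j) \<longleftrightarrow> (sim n qs i k \<and> sim n qs i j)"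
      by (meson sim_trans sim_sym)
    then show "ext n qs A $$ (i,k) * ext n qs B $$ (k,j) = (if sim n qs i k \<and> sim n qs i j then A $$ (loc qs i, loc qs k) * B $$ (loc qs k, loc qs j) else 0)"
      using i j k by (auto simp: ext_index)
  qed
  also have "\<dots> = (if sim n qs i j then (\<Sum>k\<in>?K. A $$ (loc qs i, loc qs k) * B $$ (loc qs k, loc qs j)) else 0)"
  proof (cases "sim n qs i j")
    case True
    have "(\<Sum>k<2^n. if sim n qs i k \<and> sim n qs i j then A $$ (loc qs i, loc qs k) * B $$ (loc qs k, loc qs j) else 0)
        = (\<Sum>k\<in>{..<2^n} \<inter> {k. sim n qs i k}. A $$ (loc qs i, loc qs k) * B $$ (loc qs k, loc qs j))"
      using True by (simp add: sum.inter_restrict)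
    also have "{..<2^n} \<inter> {k. sim n qs i k} = ?K" by auto
    finally show ?thesis using True by simp
  qed simp
  also have "(\<Sum>k\<in>?K. A $$ (loc qs i, loc qs k) * B $$ (loc qs k, loc qs j))
      = (\<Sum>c<2 ^ length qs. A $$ (loc qs i, c) * B $$ (c, loc qs j))"
    using sum.reindex_bij_betw[OF loc_bij[OF wf i], of "\<lambda>c. A $$ (loc qs i, c) * B $$ (c, loc qs j)"] by simp
  also have "\<dots> = (A * B) $$ (loc qs i, loc qs j)"
    using mult_entry[OF A B loc_lt loc_lt] by simp
  finally show "(ext n qs A * ext n qs B) $$ (i,j) = ext n qs (A * B) $$ (i,j)"
    using i j by (simp add: ext_index)
qed auto

lemma ext_one:
  assumes wf: "wf_reg n qs"
  shows "ext n qs (1\<^sub>m (2 ^ length qs)) = 1\<^sub>m (2^n)"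
proof (rule eq_matI)
  fix i j assume "i < dim_row (1\<^sub>m (2^n) :: complex mat)" "j < dim_col (1\<^sub>m (2^n) :: complex mat)"
  then have i: "i < 2^n" and j: "j < 2^n" by auto
  have e: "ext n qs (1\<^sub>m (2 ^ length qs)) $$ (i,j) = (if sim n qs i j then (if loc qs i = loc qs j then 1 else 0) else 0)"
    using i j loc_lt[of qs i] loc_lt[of qs j] by (simp add: ext_index)
  show "ext n qs (1\<^sub>m (2 ^ length qs)) $$ (i,j) = 1\<^sub>m (2^n) $$ (i,j)"
  proof (cases "i = j")
    case True then show ?thesis using e i by (simp add: sim_refl)
  next
    case False then show ?thesis using e i j loc_inj[OF wf i j] by auto
  qed
qed auto

lemma ext_minus:
  assumes A: "A \<in> carrier_mat (2 ^ length qs) (2 ^ length qs)"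
    and B: "B \<in> carrier_mat (2 ^ length qs) (2 ^ length qs)"
  shows "ext n qs (A - B) = ext n qs A - ext n qs B"
proof (rule eq_matI)
  fix i j assume "i < dim_row (ext n qs A - ext n qs B)" "j < dim_col (ext n qs A - ext n qs B)"
  then have i: "i < 2^n" and j: "j < 2^n" by auto
  show "ext n qs (A - B) $$ (i,j) = (ext n qs A - ext n qs B) $$ (i,j)"
    using i j A B loc_lt[of qs i] loc_lt[of qs j] by (simp add: ext_index)
qed auto

lemma adj_index[simp]: "i < dim_col A \<Longrightarrow> j < dim_row A \<Longrightarrow> adj A $$ (i,j) = cnj (A $$ (j,i))"
  "dim_row (adj A) = dim_col A" "dim_col (adj A) = dim_row A"
  by (simp_all add: adj_def)

lemma adj_carrier[simp]: "A \<in> carrier_mat a b \<Longrightarrow> adj A \<in> carrier_mat b a"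
  by (simp add: adj_def)

lemma ext_adj:
  assumes A: "A \<in> carrier_mat (2 ^ length qs) (2 ^ length qs)"
  shows "adj (ext n qs A) = ext n qs (adj A)"
proof (rule eq_matI)
  fix i j assume "i < dim_row (ext n qs (adj A))" "j < dim_col (ext n qs (adj A))"
  then have i: "i < 2^n" and j: "j < 2^n" by auto
  show "adj (ext n qs A) $$ (i,j) = ext n qs (adj A) $$ (i,j)"
    using i j A loc_lt[of qs i] loc_lt[of qs j] sim_sym[of n qs i j] sim_sym[of n qs j i] by (simp add: ext_index)
qed auto


definition qf :: "nat \<Rightarrow> complex mat \<Rightarrow> (nat \<Rightarrow> complex) \<Rightarrow> complex" where
  "qf d A v = (\<Sum>i<d. \<Sum>j<d. cnj (v i) * A $$ (i,j) * v j)"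

lemma positive_op_qf: "positive_op d A \<longleftrightarrow> A \<in> carrier_mat d d \<and> (\<forall>v. Im (qf d A v) = 0 \<and> Re (qf d A v) \<ge> 0)"
  by (simp add: positive_op_def qf_def Let_def)

lemma qf_supp2:
  assumes "a < d" "b < d" "a \<noteq> b" "\<And>k. k \<noteq> a \<Longrightarrow> k \<noteq> b \<Longrightarrow> v k = 0"
  shows "qf d A v = cnj (v a) * A $$ (a,a) * v a + cnj (v a) * A $$ (a,b) * v b
     + cnj (v b) * A $$ (b,a) * v a + cnj (v b) * A $$ (b,b) * v b"
proof -
  have sub: "{a,b} \<subseteq> {..<d}" using assms by auto
  have z: "\<And>k. k \<notin> {a,b} \<Longrightarrow> v k = 0" using assms(4) by auto
  have inner: "(\<Sum>j<d. cnj (v i) * A $$ (i,j) * v j) = (\<Sum>j\<in>{a,b}. cnj (v i) * A $$ (i,j) * v j)" for i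
  proof (rule sum.mono_neutral_right)
    show "\<forall>j\<in>{..<d} - {a,b}. cnj (v i) * A $$ (i,j) * v j = 0" using z by simp
  qed (use sub in auto)
  have "qf d A v = (\<Sum>i\<in>{a,b}. \<Sum>j<d. cnj (v i) * A $$ (i,j) * v j)"
    unfolding qf_def
  proof (rule sum.mono_neutral_right)
    show "\<forall>i\<in>{..<d} - {a,b}. (\<Sum>j<d. cnj (v i) * A $$ (i,j) * v j) = 0" using z by simp
  qed (use sub in auto)
  also have "\<dots> = (\<Sum>i\<in>{a,b}. \<Sum>j\<in>{a,b}. cnj (v i) * A $$ (i,j) * v j)"
    using inner by simp
  finally show ?thesis using assms(3) by (simp add: algebra_simps)
qed

lemma qf_supp1:
  assumes "a < d" "\<And>k. k \<noteq> a \<Longrightarrow> v k = 0"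
  shows "qf d A v = cnj (v a) * A $$ (a,a) * v a"
proof -
  have sub: "{a} \<subseteq> {..<d}" using assms by auto
  have z: "\<And>k. k \<notin> {a} \<Longrightarrow> v k = 0" using assms(2) by auto
  have inner: "(\<Sum>j<d. cnj (v i) * A $$ (i,j) * v j) = (\<Sum>j\<in>{a}. cnj (v i) * A $$ (i,j) * v j)" for i
  proof (rule sum.mono_neutral_right)
    show "\<forall>j\<in>{..<d} - {a}. cnj (v i) * A $$ (i,j) * v j = 0" using z by simp
  qed (use sub in auto)
  have "qf d A v = (\<Sum>i\<in>{a}. \<Sum>j<d. cnj (v i) * A $$ (i,j) * v j)"
    unfolding qf_def
  proof (rule sum.mono_neutral_right)
    show "\<forall>i\<in>{..<d} - {a}. (\<Sum>j<d. cnj (v i) * A $$ (i,j) * v j) = 0" using z by simp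
  qed (use sub in auto)
  then show ?thesis using inner by simp
qed

lemma psd_diag:
  assumes "positive_op d A" "a < d"
  shows "Im (A $$ (a,a)) = 0" "Re (A $$ (a,a)) \<ge> 0"
proof -
  let ?v = "\<lambda>k. if k = a then 1 else (0::complex)"
  have "qf d A ?v = A $$ (a,a)" using qf_supp1[OF assms(2), of ?v A] by simp
  then show "Im (A $$ (a,a)) = 0" "Re (A $$ (a,a)) \<ge> 0"
    using assms(1) unfolding positive_op_qf by metis+
qed

lemma psd_trace:
  assumes "positive_op d A"
  shows "Im (mtrace A) = 0" "Re (mtrace A) \<ge> 0" "Re (mtrace A) = (\<Sum>i<d. Re (A $$ (i,i)))"
proof -
  have "A \<in> carrier_mat d d" using assms unfolding positive_op_qf by blast
  then have dr: "dim_row A = d" by blast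
  show "Im (mtrace A) = 0" using psd_diag(1)[OF assms] by (simp add: mtrace_def dr Im_sum)
  show "Re (mtrace A) \<ge> 0" using psd_diag(2)[OF assms] by (auto simp: mtrace_def dr Re_sum intro!: sum_nonneg)
  show "Re (mtrace A) = (\<Sum>i<d. Re (A $$ (i,i)))" by (simp add: mtrace_def dr Re_sum)
qed

lemma psd_diag_le_trace:
  assumes "positive_op d A" "a < d"
  shows "Re (A $$ (a,a)) \<le> Re (mtrace A)"
proof -
  have "(\<Sum>i\<in>{a}. Re (A $$ (i,i))) \<le> (\<Sum>i<d. Re (A $$ (i,i)))"
    by (rule sum_mono2) (use assms psd_diag(2)[OF assms(1)] in auto)
  then show ?thesis using psd_trace(3)[OF assms(1)] by simp
qed

lemma psd_diag2_le_trace: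
  assumes "positive_op d A" "a < d" "b < d" "a \<noteq> b"
  shows "Re (A $$ (a,a)) + Re (A $$ (b,b)) \<le> Re (mtrace A)"
proof -
  have "(\<Sum>i\<in>{a,b}. Re (A $$ (i,i))) \<le> (\<Sum>i<d. Re (A $$ (i,i)))"
    by (rule sum_mono2) (use assms psd_diag(2)[OF assms(1)] in auto)
  then show ?thesis using psd_trace(3)[OF assms(1)] assms(4) by simp
qed

lemma aux1: "(x::real) - y = 0 \<Longrightarrow> 0 \<le> s - x - y \<Longrightarrow> x \<le> s / 2" by linarith
lemma aux2: "(x::real) - y = 0 \<Longrightarrow> 0 \<le> x + y + s \<Longrightarrow> - x \<le> s / 2" by linarith
lemma aux3: "(x::real) + y = 0 \<Longrightarrow> 0 \<le> s - x + y \<Longrightarrow> x \<le> s / 2" by linarith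
lemma aux4: "(x::real) + y = 0 \<Longrightarrow> 0 \<le> s + x - y \<Longrightarrow> - x \<le> s / 2" by linarith

lemma psd_entry_bound:
  assumes "positive_op d A" "a < d" "b < d"
  shows "cmod (A $$ (a,b)) \<le> Re (mtrace A)"
proof (cases "a = b")
  case True
  then show ?thesis using psd_diag[OF assms(1,2)] psd_diag_le_trace[OF assms(1,2)]
    by (simp add: cmod_eq_Re)
next
  case False
  let ?p = "A $$ (a,b)" and ?q = "A $$ (b,a)"
  let ?s = "Re (A $$ (a,a)) + Re (A $$ (b,b))"
  have ia: "Im (A $$ (a,a)) = 0" and ib: "Im (A $$ (b,b)) = 0" using psd_diag[OF assms(1)] assms by auto
  have key: "Im (A $$ (a,a) + ?p * c + cnj c * ?q + cnj c * A $$ (b,b) * c) = 0 \<and>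
             Re (A $$ (a,a) + ?p * c + cnj c * ?q + cnj c * A $$ (b,b) * c) \<ge> 0" for c
  proof -
    let ?v = "\<lambda>k. if k = a then 1 else if k = b then c else (0::complex)"
    have "qf d A ?v = A $$ (a,a) + ?p * c + cnj c * ?q + cnj c * A $$ (b,b) * c"
      using qf_supp2[OF assms(2,3) False, of ?v A] False by simp
    then show ?thesis using assms(1) unfolding positive_op_qf by metis
  qed
  note k1 = key[of 1] note k2 = key[of "-1"] note k3 = key[of "\<i>"] note k4 = key[of "-\<i>"]
  have e1: "Im ?p + Im ?q = 0" "Re ?p + Re ?q + ?s \<ge> 0" using k1 ia ib by simp_all
  have e2: "?s - Re ?p - Re ?q \<ge> 0" using k2 ia ib by simp
  have e3: "Re ?p - Re ?q = 0" "?s - Im ?p + Im ?q \<ge> 0" using k3 ia ib by simp_all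
  have e4: "?s + Im ?p - Im ?q \<ge> 0" using k4 ia ib by simp
  have "Re ?p \<le> ?s / 2" using aux1[OF e3(1) e2] .
  moreover have "- Re ?p \<le> ?s / 2" using aux2[OF e3(1) e1(2)] .
  moreover have "Im ?p \<le> ?s / 2" using aux3[OF e1(1) e3(2)] .
  moreover have "- Im ?p \<le> ?s / 2" using aux4[OF e1(1) e4] .
  ultimately have r1: "\<bar>Re ?p\<bar> \<le> ?s / 2" and r2: "\<bar>Im ?p\<bar> \<le> ?s / 2" by (simp_all only: abs_le_iff)
  have "\<bar>Re ?p\<bar> + \<bar>Im ?p\<bar> \<le> ?s" using add_mono[OF r1 r2] by simp
  then have "cmod ?p \<le> ?s" using cmod_le[of ?p] by (rule order_trans[rotated])
  then show ?thesis using psd_diag2_le_trace[OF assms False] by linarith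
qed


declare index_mult_mat(1)[simp del]

lemma mtrace_mult_comm:
  assumes A: "A \<in> carrier_mat d m" and B: "B \<in> carrier_mat m d"
  shows "mtrace (A * B) = mtrace (B * A)"
proof -
  have "mtrace (A * B) = (\<Sum>i<d. \<Sum>k<m. A $$ (i,k) * B $$ (k,i))"
    unfolding mtrace_def using A B by (auto simp: mult_entry[OF A B] intro!: sum.cong)
  also have "\<dots> = (\<Sum>k<m. \<Sum>i<d. B $$ (k,i) * A $$ (i,k))"
    by (subst sum.swap) (simp add: mult.commute)
  also have "\<dots> = mtrace (B * A)"
    unfolding mtrace_def using A B by (auto simp: mult_entry[OF B A] intro!: sum.cong)
  finally show ?thesis .
qed

lemma mtrace_add:
  assumes A: "A \<in> carrier_mat d d" and B: "B \<in> carrier_mat d d"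
  shows "mtrace (A + B) = mtrace A + mtrace B"
  unfolding mtrace_def using A B by (auto simp: sum.distrib[symmetric] intro!: sum.cong)

lemma mtrace_minus:
  assumes A: "A \<in> carrier_mat d d" and B: "B \<in> carrier_mat d d"
  shows "mtrace (A - B) = mtrace A - mtrace B"
  unfolding mtrace_def using A B by (auto simp: sum_subtractf[symmetric] intro!: sum.cong)

lemma psd_carrier: "positive_op d A \<Longrightarrow> A \<in> carrier_mat d d"
  unfolding positive_op_qf by blast

lemma psd_add:
  assumes A: "positive_op d A" and B: "positive_op d B"
  shows "positive_op d (A + B)"
proof -
  have cA: "A \<in> carrier_mat d d" and cB: "B \<in> carrier_mat d d" using A B psd_carrier by auto
  have "qf d (A + B) v = qf d A v + qf d B v" for v
    unfolding qf_def sum.distrib[symmetric] using cA cB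
    by (auto simp: algebra_simps sum.distrib[symmetric] intro!: sum.cong)
  then show ?thesis using A B cA cB unfolding positive_op_qf by auto
qed

lemma psd_zero: "positive_op d (0\<^sub>m d d)"
  unfolding positive_op_qf qf_def by auto

lemma swap4:
  fixes F :: "nat \<Rightarrow> nat \<Rightarrow> nat \<Rightarrow> nat \<Rightarrow> complex"
  shows "(\<Sum>i<d. \<Sum>j<d. \<Sum>l<d. \<Sum>k<d. F i j k l) = (\<Sum>k<d. \<Sum>l<d. \<Sum>i<d. \<Sum>j<d. F i j k l)"
proof -
  have "(\<Sum>i<d. \<Sum>j<d. \<Sum>l<d. \<Sum>k<d. F i j k l) = (\<Sum>i<d. \<Sum>l<d. \<Sum>j<d. \<Sum>k<d. F i j k l)"
    by (rule sum.cong[OF refl], rule sum.swap)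
  also have "\<dots> = (\<Sum>i<d. \<Sum>l<d. \<Sum>k<d. \<Sum>j<d. F i j k l)"
    by (rule sum.cong[OF refl], rule sum.cong[OF refl], rule sum.swap)
  also have "\<dots> = (\<Sum>l<d. \<Sum>i<d. \<Sum>k<d. \<Sum>j<d. F i j k l)"
    by (rule sum.swap)
  also have "\<dots> = (\<Sum>l<d. \<Sum>k<d. \<Sum>i<d. \<Sum>j<d. F i j k l)"
    by (rule sum.cong[OF refl], rule sum.swap)
  also have "\<dots> = (\<Sum>k<d. \<Sum>l<d. \<Sum>i<d. \<Sum>j<d. F i j k l)"
    by (rule sum.swap)
  finally show ?thesis .
qed

lemma qf_conj:
  assumes X: "X \<in> carrier_mat d d" and R: "R \<in> carrier_mat d d"
  shows "qf d (X * R * adj X) v = qf d R (\<lambda>l. \<Sum>j<d. cnj (X $$ (j,l)) * v j)"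
proof -
  let ?F = "\<lambda>i j k l. cnj (v i) * X $$ (i,k) * R $$ (k,l) * cnj (X $$ (j,l)) * v j"
  have XR: "X * R \<in> carrier_mat d d" using X R by auto
  have aX: "adj X \<in> carrier_mat d d" using X by auto
  have ent: "(X * R * adj X) $$ (i,j) = (\<Sum>l<d. (\<Sum>k<d. X $$ (i,k) * R $$ (k,l)) * cnj (X $$ (j,l)))"
    if "i < d" "j < d" for i j
    using that X R by (simp add: mult_entry[OF XR aX] mult_entry[OF X R])
  have "qf d (X * R * adj X) v = (\<Sum>i<d. \<Sum>j<d. \<Sum>l<d. \<Sum>k<d. ?F i j k l)"
    unfolding qf_def
    by (intro sum.cong refl) (simp add: ent sum_distrib_left sum_distrib_right mult_ac)
  also have "\<dots> = (\<Sum>k<d. \<Sum>l<d. \<Sum>i<d. \<Sum>j<d. ?F i j k l)"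
    by (rule swap4)
  also have "\<dots> = qf d R (\<lambda>l. \<Sum>j<d. cnj (X $$ (j,l)) * v j)"
    unfolding qf_def
    by (intro sum.cong refl) (simp add: sum_distrib_left sum_distrib_right mult_ac)
  finally show ?thesis .
qed

lemma psd_conj:
  assumes X: "X \<in> carrier_mat d d" and R: "positive_op d R"
  shows "positive_op d (X * R * adj X)"
proof -
  have cR: "R \<in> carrier_mat d d" using R psd_carrier by auto
  have c: "X * R * adj X \<in> carrier_mat d d" using X cR by auto
  show ?thesis using R c unfolding positive_op_qf qf_conj[OF X cR] by auto
qed


declare minus_carrier_mat[simp]

lemma projector_carrier: "projector d P \<Longrightarrow> P \<in> carrier_mat d d"
  by (simp add: projector_def)

lemma adj_self_entry:
  assumes "adj P = P" "P \<in> carrier_mat d d" "i < d" "j < d"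
  shows "cnj (P $$ (j,i)) = P $$ (i,j)"
proof -
  have "adj P $$ (i,j) = cnj (P $$ (j,i))" using assms(2-4) by simp
  then show ?thesis using assms(1) by simp
qed

lemma projector_perp_gen:
  assumes P: "projector d P"
  shows "projector d (1\<^sub>m d - P)"
proof -
  have cP: "P \<in> carrier_mat d d" and PP: "P * P = P" and aP: "adj P = P"
    using P by (auto simp: projector_def)
  have one: "(1\<^sub>m d :: complex mat) \<in> carrier_mat d d" by simp
  have c: "1\<^sub>m d - P \<in> carrier_mat d d" using cP by simp
  have "(1\<^sub>m d - P) * (1\<^sub>m d - P) = (1\<^sub>m d - P) * 1\<^sub>m d - (1\<^sub>m d - P) * P"
    by (rule mult_minus_distrib_mat[OF c one cP])
  also have "(1\<^sub>m d - P) * 1\<^sub>m d = 1\<^sub>m d - P" by (rule right_mult_one_mat[OF c])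
  also have "(1\<^sub>m d - P) * P = 1\<^sub>m d * P - P * P"
    by (rule minus_mult_distrib_mat[OF one cP cP])
  also have "\<dots> = P - P" using left_mult_one_mat[OF cP] PP by simp
  finally have sq: "(1\<^sub>m d - P) * (1\<^sub>m d - P) = 1\<^sub>m d - P - (P - P)" .
  have "1\<^sub>m d - P - (P - P) = 1\<^sub>m d - P"
    by (rule eq_matI) (use cP in auto)
  with sq have sq': "(1\<^sub>m d - P) * (1\<^sub>m d - P) = 1\<^sub>m d - P" by simp
  have ad: "adj (1\<^sub>m d - P) = 1\<^sub>m d - P"
  proof (rule eq_matI)
    fix i j assume "i < dim_row (1\<^sub>m d - P)" "j < dim_col (1\<^sub>m d - P)"
    then have i: "i < d" and j: "j < d" using cP by auto
    show "adj (1\<^sub>m d - P) $$ (i,j) = (1\<^sub>m d - P) $$ (i,j)"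
      using i j cP adj_self_entry[OF aP cP i j] by auto
  qed (use cP in auto)
  show ?thesis using c sq' ad by (simp add: projector_def)
qed

lemma ext_projector:
  assumes wf: "wf_reg n qs" and P: "projector (2 ^ length qs) P"
  shows "projector (2^n) (ext n qs P)"
proof -
  have cP: "P \<in> carrier_mat (2 ^ length qs) (2 ^ length qs)" using P by (simp add: projector_def)
  show ?thesis
    using P unfolding projector_def
    by (simp add: ext_mult[OF wf cP cP] ext_adj[OF cP])
qed

lemma ext_perp:
  assumes wf: "wf_reg n qs" and cP: "P \<in> carrier_mat (2 ^ length qs) (2 ^ length qs)"
  shows "ext n qs (perp qs P) = 1\<^sub>m (2^n) - ext n qs P"
  unfolding perp_def using ext_minus[of "1\<^sub>m (2 ^ length qs)" qs P n] cP ext_one[OF wf] by simp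

lemma trace_proj:
  assumes X: "projector d X" and R: "R \<in> carrier_mat d d"
  shows "mtrace (X * R * X) = mtrace (X * R)"
proof -
  have cX: "X \<in> carrier_mat d d" and XX: "X * X = X" using X by (auto simp: projector_def)
  have "mtrace (X * R * X) = mtrace (X * (X * R))"
    by (rule mtrace_mult_comm) (use cX R in auto)
  also have "X * (X * R) = (X * X) * R" using cX R by (simp add: assoc_mult_mat)
  finally show ?thesis using XX by simp
qed

lemma proj_split:
  assumes X: "projector d X" and R: "R \<in> carrier_mat d d"
  shows "mtrace (X * R * X) + mtrace ((1\<^sub>m d - X) * R * (1\<^sub>m d - X)) = mtrace R"
proof -
  have cX: "X \<in> carrier_mat d d" using X by (simp add: projector_def)
  have Y: "projector d (1\<^sub>m d - X)" by (rule projector_perp_gen[OF X])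
  have "(1\<^sub>m d - X) * R = 1\<^sub>m d * R - X * R"
    by (rule minus_mult_distrib_mat) (use cX R in auto)
  then have e: "(1\<^sub>m d - X) * R = R - X * R" using R by simp
  have "mtrace ((1\<^sub>m d - X) * R * (1\<^sub>m d - X)) = mtrace ((1\<^sub>m d - X) * R)" by (rule trace_proj[OF Y R])
  also have "\<dots> = mtrace R - mtrace (X * R)" unfolding e by (rule mtrace_minus) (use cX R in auto)
  finally show ?thesis unfolding trace_proj[OF X R] by simp
qed

lemma proj_psd:
  assumes X: "projector d X" and R: "positive_op d R"
  shows "positive_op d (X * R * X)"
proof -
  have "X * R * X = X * R * adj X" using X by (simp add: projector_def)
  then show ?thesis using psd_conj[OF projector_carrier[OF X] R] by simp
qed

lemma assert_props:
  assumes wf: "wf_reg n qs" and P: "projector (2 ^ length qs) P" and R: "positive_op (2^n) R"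
  shows "positive_op (2^n) (assert_op n qs P R)"
    "positive_op (2^n) (assert_op n qs (perp qs P) R)"
    "Re (mtrace (assert_op n qs P R)) + Re (mtrace (assert_op n qs (perp qs P) R)) = Re (mtrace R)"
proof -
  have cP: "P \<in> carrier_mat (2 ^ length qs) (2 ^ length qs)" using P by (simp add: projector_def)
  have X: "projector (2^n) (ext n qs P)" by (rule ext_projector[OF wf P])
  have Y: "projector (2^n) (ext n qs (perp qs P))"
    unfolding ext_perp[OF wf cP] by (rule projector_perp_gen[OF X])
  show "positive_op (2^n) (assert_op n qs P R)" unfolding assert_op_def by (rule proj_psd[OF X R])
  show "positive_op (2^n) (assert_op n qs (perp qs P) R)" unfolding assert_op_def by (rule proj_psd[OF Y R])
  have "mtrace (assert_op n qs P R) + mtrace (assert_op n qs (perp qs P) R) = mtrace R"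
    unfolding assert_op_def ext_perp[OF wf cP] by (rule proj_split[OF X psd_carrier[OF R]])
  then show "Re (mtrace (assert_op n qs P R)) + Re (mtrace (assert_op n qs (perp qs P) R)) = Re (mtrace R)"
    by (metis plus_complex.sel(1))
qed

lemma unit_props:
  assumes wf: "wf_reg n qs" and U: "unitary_op (2 ^ length qs) U" and R: "positive_op (2^n) R"
  shows "positive_op (2^n) (ext n qs U * R * adj (ext n qs U))"
    "mtrace (ext n qs U * R * adj (ext n qs U)) = mtrace R"
proof -
  have cU: "U \<in> carrier_mat (2 ^ length qs) (2 ^ length qs)" and UU: "adj U * U = 1\<^sub>m (2 ^ length qs)"
    using U by (auto simp: unitary_op_def)
  have cR: "R \<in> carrier_mat (2^n) (2^n)" by (rule psd_carrier[OF R])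
  show "positive_op (2^n) (ext n qs U * R * adj (ext n qs U))" by (rule psd_conj[OF ext_carrier R])
  have X: "adj (ext n qs U) * ext n qs U = 1\<^sub>m (2^n)"
    unfolding ext_adj[OF cU] ext_mult[OF wf adj_carrier[OF cU] cU] UU ext_one[OF wf] ..
  have "mtrace (ext n qs U * R * adj (ext n qs U)) = mtrace (adj (ext n qs U) * (ext n qs U * R))"
    by (rule mtrace_mult_comm) (use cR in auto)
  also have "adj (ext n qs U) * (ext n qs U * R) = (adj (ext n qs U) * ext n qs U) * R"
    using cR by (simp add: assoc_mult_mat[symmetric, of _ "2^n" "2^n" _ "2^n" _ "2^n"])
  finally show "mtrace (ext n qs U * R * adj (ext n qs U)) = mtrace R" using X cR by simp
qed


declare minus_carrier_mat[simp]
declare index_mult_mat(1)[simp del]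

lemma mtrace_zero: "mtrace (0\<^sub>m d d) = 0"
  by (simp add: mtrace_def)

lemma foldr_props:
  fixes K :: "nat \<Rightarrow> complex mat"
  assumes K: "\<forall>i\<in>set xs. K i \<in> carrier_mat d d" and R: "positive_op d R"
  shows "positive_op d (foldr (\<lambda>i M. K i * R * adj (K i) + M) xs (0\<^sub>m d d)) \<and>
         mtrace (foldr (\<lambda>i M. K i * R * adj (K i) + M) xs (0\<^sub>m d d)) = (\<Sum>i\<leftarrow>xs. mtrace (K i * R * adj (K i)))"
  using K
proof (induction xs)
  case Nil then show ?case by (simp add: psd_zero mtrace_zero)
next
  case (Cons a xs)
  let ?F = "foldr (\<lambda>i M. K i * R * adj (K i) + M) xs (0\<^sub>m d d)"
  have IH: "positive_op d ?F" "mtrace ?F = (\<Sum>i\<leftarrow>xs. mtrace (K i * R * adj (K i)))" using Cons by auto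
  have Ka: "K a \<in> carrier_mat d d" using Cons by auto
  have p1: "positive_op d (K a * R * adj (K a))" by (rule psd_conj[OF Ka R])
  have "mtrace (K a * R * adj (K a) + ?F) = mtrace (K a * R * adj (K a)) + mtrace ?F"
    by (rule mtrace_add[OF psd_carrier[OF p1] psd_carrier[OF IH(1)]])
  then show ?case using psd_add[OF p1 IH(1)] IH(2) by simp
qed

lemma kb_entry:
  assumes "c < 2 ^ length qs" "a < 2 ^ length qs" "b < 2 ^ length qs"
  shows "(adj (ket0bra qs c) * ket0bra qs c) $$ (a,b) = (if a = c \<and> b = c then 1 else 0)"
proof -
  let ?N = "2 ^ length qs"
  have ck: "ket0bra qs c \<in> carrier_mat ?N ?N" by (simp add: ket0bra_def)
  have "(adj (ket0bra qs c) * ket0bra qs c) $$ (a,b) = (\<Sum>m<?N. adj (ket0bra qs c) $$ (a,m) * ket0bra qs c $$ (m,b))"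
    by (rule mult_entry[OF adj_carrier[OF ck] ck assms(2,3)])
  also have "\<dots> = (\<Sum>m<?N. if (m::nat) = 0 then (if a = c \<and> b = c then 1 else 0) else 0)"
    using assms by (intro sum.cong refl) (auto simp: ket0bra_def)
  also have "\<dots> = (if a = c \<and> b = c then 1 else 0)" by simp
  finally show ?thesis .
qed

lemma init_trace_term:
  assumes wf: "wf_reg n qs" and c: "c < 2 ^ length qs" and R: "R \<in> carrier_mat (2^n) (2^n)"
  shows "mtrace (ext n qs (ket0bra qs c) * R * adj (ext n qs (ket0bra qs c)))
       = (\<Sum>i<2^n. if loc qs i = c then R $$ (i,i) else 0)"
proof -
  let ?N = "2 ^ length qs" and ?D = "2^n::nat"
  let ?K = "ext n qs (ket0bra qs c)"
  let ?E = "adj (ket0bra qs c) * ket0bra qs c"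
  have ck: "ket0bra qs c \<in> carrier_mat ?N ?N" by (simp add: ket0bra_def)
  have "mtrace (?K * R * adj ?K) = mtrace (adj ?K * (?K * R))"
    by (rule mtrace_mult_comm) (use R in auto)
  also have "adj ?K * (?K * R) = (adj ?K * ?K) * R"
    using R by (simp add: assoc_mult_mat[symmetric, of _ "2^n" "2^n" _ "2^n" _ "2^n"])
  also have "adj ?K * ?K = ext n qs ?E"
    unfolding ext_adj[OF ck] by (rule ext_mult[OF wf adj_carrier[OF ck] ck])
  also have "mtrace (ext n qs ?E * R) = (\<Sum>i<?D. \<Sum>k<?D. ext n qs ?E $$ (i,k) * R $$ (k,i))"
    unfolding mtrace_def using R by (auto simp: mult_entry[OF ext_carrier R] intro!: sum.cong)
  also have "\<dots> = (\<Sum>i<?D. \<Sum>k<?D. if k = i then (if loc qs i = c then R $$ (i,i) else 0) else 0)"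
  proof (intro sum.cong refl)
    fix i k assume i: "i \<in> {..<?D}" and k: "k \<in> {..<?D}"
    have li: "loc qs i < ?N" and lk: "loc qs k < ?N" by (rule loc_lt)+
    have e: "ext n qs ?E $$ (i,k) = (if sim n qs i k \<and> loc qs i = c \<and> loc qs k = c then 1 else 0)"
      using i k li lk by (simp add: ext_index kb_entry[OF c])
    show "ext n qs ?E $$ (i,k) * R $$ (k,i) = (if k = i then (if loc qs i = c then R $$ (i,i) else 0) else 0)"
    proof (cases "k = i")
      case True then show ?thesis using e by (simp add: sim_refl)
    next
      case False
      have nc: "\<not> (sim n qs i k \<and> loc qs i = c \<and> loc qs k = c)"
        using loc_inj[OF wf, of i k] i k False by auto
      have "ext n qs ?E $$ (i,k) = 0" by (simp only: e if_not_P[OF nc])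
      then show ?thesis using False by simp
    qed
  qed
  also have "\<dots> = (\<Sum>i<?D. if loc qs i = c then R $$ (i,i) else 0)"
    by simp
  finally show ?thesis .
qed

lemma init_props:
  assumes wf: "wf_reg n qs" and R: "positive_op (2^n) R"
  shows "positive_op (2^n) (sem n (Init qs) R) \<and> mtrace (sem n (Init qs) R) = mtrace R"
proof -
  let ?N = "2 ^ length qs" and ?D = "2^n::nat"
  have cR: "R \<in> carrier_mat ?D ?D" by (rule psd_carrier[OF R])
  have fp: "positive_op ?D (sem n (Init qs) R) \<and>
     mtrace (sem n (Init qs) R) = (\<Sum>i\<leftarrow>[0..<?N]. mtrace (ext n qs (ket0bra qs i) * R * adj (ext n qs (ket0bra qs i))))"
    using foldr_props[of "[0..<?N]" "\<lambda>i. ext n qs (ket0bra qs i)" ?D R] R by simp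
  have "(\<Sum>i\<leftarrow>[0..<?N]. mtrace (ext n qs (ket0bra qs i) * R * adj (ext n qs (ket0bra qs i))))
     = (\<Sum>c<?N. mtrace (ext n qs (ket0bra qs c) * R * adj (ext n qs (ket0bra qs c))))"
    by (simp add: sum_set_upt_conv_sum_list_nat[symmetric] atLeast0LessThan)
  also have "\<dots> = (\<Sum>c<?N. \<Sum>i<?D. if loc qs i = c then R $$ (i,i) else 0)"
    by (intro sum.cong refl, rule init_trace_term[OF wf _ cR]) auto
  also have "\<dots> = (\<Sum>i<?D. \<Sum>c<?N. if loc qs i = c then R $$ (i,i) else 0)"
    by (rule sum.swap)
  also have "\<dots> = (\<Sum>i<?D. R $$ (i,i))"
    using loc_lt by (intro sum.cong refl) (simp add: sum.delta)
  also have "\<dots> = mtrace R" using cR by (simp add: mtrace_def)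
  finally show ?thesis using fp by simp
qed


declare minus_carrier_mat[simp]
declare index_mult_mat(1)[simp del]

lemma msuminf_index: "a < d \<Longrightarrow> b < d \<Longrightarrow> msuminf d T $$ (a,b) = (\<Sum>k. T k $$ (a,b))"
  by (simp add: msuminf_def)

lemma msuminf_carrier: "msuminf d T \<in> carrier_mat d d"
  by (simp add: msuminf_def)

lemma mtrace_psd_sum: "positive_op d A \<Longrightarrow> mtrace A = (\<Sum>i<d. A $$ (i,i))"
  using psd_carrier[of d A] by (simp add: mtrace_def)

lemma series_props:
  fixes g f0 :: "complex mat \<Rightarrow> complex mat" and d :: nat and R :: "complex mat"
  assumes R: "positive_op d R"
   and H: "\<And>\<sigma>. positive_op d \<sigma> \<Longrightarrow> positive_op d (g \<sigma>) \<and> positive_op d (f0 \<sigma>) \<and>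
              Re (mtrace (g \<sigma>)) + Re (mtrace (f0 \<sigma>)) \<le> Re (mtrace \<sigma>)"
  shows "\<forall>k. positive_op d (f0 ((g ^^ k) R))"
    and "\<forall>a<d. \<forall>b<d. summable (\<lambda>k. f0 ((g ^^ k) R) $$ (a,b))"
    and "positive_op d (msuminf d (\<lambda>k. f0 ((g ^^ k) R)))"
    and "Re (mtrace (msuminf d (\<lambda>k. f0 ((g ^^ k) R)))) \<le> Re (mtrace R)"
proof -
  define T where "T = (\<lambda>k. f0 ((g ^^ k) R))"
  define M where "M = msuminf d T"
  have pk: "positive_op d ((g ^^ k) R)" for k
    by (induction k) (use R H in auto)
  have pT: "positive_op d (T k)" for k using H[OF pk[of k]] by (simp add: T_def)
  show "\<forall>k. positive_op d (f0 ((g ^^ k) R))" using pT by (simp add: T_def)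
  have part: "(\<Sum>k<N. Re (mtrace (T k))) + Re (mtrace ((g ^^ N) R)) \<le> Re (mtrace R)" for N
  proof (induction N)
    case 0 then show ?case by simp
  next
    case (Suc N)
    have "Re (mtrace ((g ^^ Suc N) R)) + Re (mtrace (T N)) \<le> Re (mtrace ((g ^^ N) R))"
      using H[OF pk[of N]] by (simp add: T_def)
    then show ?case using Suc by simp
  qed
  have bnd: "(\<Sum>k<N. Re (mtrace (T k))) \<le> Re (mtrace R)" for N
    using part[of N] psd_trace(2)[OF pk[of N]] by linarith
  have strace: "summable (\<lambda>k. Re (mtrace (T k)))"
    by (rule summableI_nonneg_bounded[OF psd_trace(2)[OF pT] bnd])
  have sent: "summable (\<lambda>k. T k $$ (a,b))" if "a < d" "b < d" for a b
    by (rule summable_comparison_test'[OF strace, of 0]) (use psd_entry_bound[OF pT that] in auto)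
  then show "\<forall>a<d. \<forall>b<d. summable (\<lambda>k. f0 ((g ^^ k) R) $$ (a,b))" by (simp add: T_def)
  have sums_ent: "(\<lambda>k. T k $$ (a,b)) sums (M $$ (a,b))" if "a < d" "b < d" for a b
    using summable_sums[OF sent[OF that]] that by (simp add: M_def msuminf_index)
  have sums_qf: "(\<lambda>k. qf d (T k) v) sums qf d M v" for v
    unfolding qf_def
    by (intro sums_sum sums_mult2 sums_mult sums_ent) auto
  have cM: "M \<in> carrier_mat d d" by (simp add: M_def msuminf_carrier)
  have "Im (qf d M v) = 0 \<and> Re (qf d M v) \<ge> 0" for v
  proof -
    have sI: "(\<lambda>k. Im (qf d (T k) v)) sums Im (qf d M v)"
     and sR: "(\<lambda>k. Re (qf d (T k) v)) sums Re (qf d M v)"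
      using sums_qf[of v] by (simp_all add: sums_complex_iff)
    have z: "(\<lambda>k. Im (qf d (T k) v)) = (\<lambda>k. 0)" using pT unfolding positive_op_qf by auto
    have "Im (qf d M v) = 0" using sI unfolding z by (metis sums_unique sums_zero)
    moreover have "0 \<le> Re (qf d M v)"
      by (rule sums_le[OF _ sums_zero sR]) (use pT in \<open>auto simp: positive_op_qf\<close>)
    ultimately show ?thesis by simp
  qed
  then have pM: "positive_op d M" using cM unfolding positive_op_qf by auto
  then show "positive_op d (msuminf d (\<lambda>k. f0 ((g ^^ k) R)))" by (simp add: M_def T_def)
  have "(\<lambda>k. mtrace (T k)) sums mtrace M"
    unfolding mtrace_psd_sum[OF pM] mtrace_psd_sum[OF pT]
    by (intro sums_sum sums_ent) auto
  then have "(\<lambda>k. Re (mtrace (T k))) sums Re (mtrace M)" by (simp add: sums_complex_iff)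
  then have "Re (mtrace M) = (\<Sum>k. Re (mtrace (T k)))" by (rule sums_unique)
  also have "\<dots> \<le> Re (mtrace R)" by (rule suminf_le_const[OF strace bnd])
  finally show "Re (mtrace (msuminf d (\<lambda>k. f0 ((g ^^ k) R)))) \<le> Re (mtrace R)" by (simp add: M_def T_def)
qed


declare minus_carrier_mat[simp]
declare index_mult_mat(1)[simp del]

lemma sem_inv:
  assumes "wf_prog n S" "positive_op (2^n) \<rho>"
  shows "positive_op (2^n) (sem n S \<rho>) \<and> Re (mtrace (sem n S \<rho>)) \<le> Re (mtrace \<rho>)"
  using assms
proof (induction S arbitrary: \<rho>)
  case Skip then show ?case by simp
next
  case (Init qs) then show ?case using init_props[of n qs \<rho>] by simp
next
  case (Unit qs U) then show ?case using unit_props[of n qs U \<rho>] by simp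
next
  case (Assert qs P)
  have wf: "wf_reg n qs" and P: "projector (2 ^ length qs) P" using Assert by auto
  note ap = assert_props[OF wf P Assert(2)]
  then show ?case using psd_trace(2)[OF ap(2)] by simp
next
  case (Seq S0 S1)
  then show ?case by (metis order_trans sem.simps(5) wf_prog.simps(5))
next
  case (If qs P S1 S0)
  have wf: "wf_reg n qs" and P: "projector (2 ^ length qs) P" and w1: "wf_prog n S1" and w0: "wf_prog n S0"
    using If by auto
  note ap = assert_props[OF wf P If(4)]
  have A: "positive_op (2^n) (sem n S1 (assert_op n qs P \<rho>)) \<and>
     Re (mtrace (sem n S1 (assert_op n qs P \<rho>))) \<le> Re (mtrace (assert_op n qs P \<rho>))"
    using If(1)[OF w1 ap(1)] .
  have B: "positive_op (2^n) (sem n S0 (assert_op n qs (perp qs P) \<rho>)) \<and>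
     Re (mtrace (sem n S0 (assert_op n qs (perp qs P) \<rho>))) \<le> Re (mtrace (assert_op n qs (perp qs P) \<rho>))"
    using If(2)[OF w0 ap(2)] .
  have tr: "mtrace (sem n (If qs P S1 S0) \<rho>) = mtrace (sem n S1 (assert_op n qs P \<rho>)) + mtrace (sem n S0 (assert_op n qs (perp qs P) \<rho>))"
    using mtrace_add[OF psd_carrier[of "2^n"] psd_carrier[of "2^n"]] A B by simp
  show ?case using psd_add[of "2^n"] A B ap(3) tr by simp
next
  case (While qs P S)
  have wf: "wf_reg n qs" and P: "projector (2 ^ length qs) P" and w: "wf_prog n S"
    using While by auto
  let ?g = "\<lambda>\<sigma>. sem n S (assert_op n qs P \<sigma>)" and ?f0 = "assert_op n qs (perp qs P)"
  have H: "positive_op (2^n) (?g \<sigma>) \<and> positive_op (2^n) (?f0 \<sigma>) \<and>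
              Re (mtrace (?g \<sigma>)) + Re (mtrace (?f0 \<sigma>)) \<le> Re (mtrace \<sigma>)" if "positive_op (2^n) \<sigma>" for \<sigma>
  proof -
    note ap = assert_props[OF wf P that]
    have "positive_op (2^n) (?g \<sigma>) \<and> Re (mtrace (?g \<sigma>)) \<le> Re (mtrace (assert_op n qs P \<sigma>))"
      using While(1)[OF w ap(1)] .
    then show ?thesis using ap by linarith
  qed
  note sp = series_props[of "2^n" \<rho> ?g ?f0, OF While(3) H]
  show ?case using sp(3,4) by simp
qed

lemma sem_dens:
  assumes "wf_prog n S" "\<rho> \<in> Dens n"
  shows "sem n S \<rho> \<in> Dens n"
  using sem_inv[OF assms(1), of \<rho>] assms(2) by (auto simp: Dens_def)

lemma while_summable:
  assumes "wf_prog n (While qs P S)" "positive_op (2^n) \<rho>"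
  shows "\<forall>a<2^n. \<forall>b<2^n. summable (\<lambda>k. assert_op n qs (perp qs P) (((\<lambda>\<sigma>. sem n S (assert_op n qs P \<sigma>)) ^^ k) \<rho>) $$ (a,b))"
proof -
  have wf: "wf_reg n qs" and P: "projector (2 ^ length qs) P" and w: "wf_prog n S"
    using assms by auto
  let ?g = "\<lambda>\<sigma>. sem n S (assert_op n qs P \<sigma>)" and ?f0 = "assert_op n qs (perp qs P)"
  have H: "positive_op (2^n) (?g \<sigma>) \<and> positive_op (2^n) (?f0 \<sigma>) \<and>
              Re (mtrace (?g \<sigma>)) + Re (mtrace (?f0 \<sigma>)) \<le> Re (mtrace \<sigma>)" if "positive_op (2^n) \<sigma>" for \<sigma>
  proof -
    note ap = assert_props[OF wf P that]
    have "positive_op (2^n) (?g \<sigma>) \<and> Re (mtrace (?g \<sigma>)) \<le> Re (mtrace (assert_op n qs P \<sigma>))"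
      using sem_inv[OF w ap(1)] .
    then show ?thesis using ap by linarith
  qed
  show ?thesis using series_props(2)[of "2^n" \<rho> ?g ?f0, OF assms(2) H] by blast
qed

lemma projector_perp: "projector (2 ^ length qs) P \<Longrightarrow> projector (2 ^ length qs) (perp qs P)"
  unfolding perp_def by (rule projector_perp_gen)

lemma dens_psd: "\<rho> \<in> Dens n \<Longrightarrow> positive_op (2^n) \<rho>"
  by (simp add: Dens_def)


definition cong :: "nat \<Rightarrow> (complex mat set \<Rightarrow> 'a) \<Rightarrow> (complex mat \<Rightarrow> complex mat) \<Rightarrow> bool" where
  "cong n \<alpha> f \<longleftrightarrow> (\<forall>\<rho>\<in>Dens n. f \<rho> \<in> Dens n) \<and>
     (\<forall>R1 R2. R1 \<subseteq> Dens n \<longrightarrow> R2 \<subseteq> Dens n \<longrightarrow> \<alpha> R1 = \<alpha> R2 \<longrightarrow> \<alpha> (f ` R1) = \<alpha> (f ` R2))"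

lemma cong_dens: "cong n \<alpha> f \<Longrightarrow> R \<subseteq> Dens n \<Longrightarrow> f ` R \<subseteq> Dens n"
  by (auto simp: cong_def)

lemma cong_comp:
  assumes f: "cong n \<alpha> f" and g: "cong n \<alpha> g" shows "cong n \<alpha> (g \<circ> f)"
proof -
  have "\<alpha> ((g \<circ> f) ` R1) = \<alpha> ((g \<circ> f) ` R2)"
    if "R1 \<subseteq> Dens n" "R2 \<subseteq> Dens n" "\<alpha> R1 = \<alpha> R2" for R1 R2
  proof -
    have "f ` R1 \<subseteq> Dens n" "f ` R2 \<subseteq> Dens n" "\<alpha> (f ` R1) = \<alpha> (f ` R2)"
      using f that unfolding cong_def by blast+
    then have "\<alpha> (g ` f ` R1) = \<alpha> (g ` f ` R2)" using g unfolding cong_def by blast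
    then show ?thesis by (simp add: image_comp)
  qed
  note main = this
  have d: "\<forall>\<rho>\<in>Dens n. (g \<circ> f) \<rho> \<in> Dens n" using f g unfolding cong_def by simp
  show ?thesis unfolding cong_def using d main by blast
qed

lemma cong_id: "cong n \<alpha> id"
  by (simp add: cong_def)

lemma cong_pow: assumes g: "cong n \<alpha> g" shows "cong n \<alpha> (g ^^ i)"
proof (induction i)
  case 0 then show ?case using cong_id[of n \<alpha>] by (simp add: id_def)
next
  case (Suc i) then show ?case using cong_comp[OF Suc.IH g] by (simp add: comp_def)
qed

context
  fixes n :: nat and \<alpha> :: "complex mat set \<Rightarrow> 'a::complete_lattice" and \<gamma> :: "'a \<Rightarrow> complex mat set"
  assumes WS: "well_structured n \<alpha> \<gamma>"
begin

lemma g_dens: "\<gamma> a \<subseteq> Dens n" using WS by (simp add: well_structured_def)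
lemma a_mono: "R1 \<subseteq> R2 \<Longrightarrow> R2 \<subseteq> Dens n \<Longrightarrow> \<alpha> R1 \<le> \<alpha> R2" using WS by (simp add: well_structured_def)
lemma g_mono: "a \<le> b \<Longrightarrow> \<gamma> a \<subseteq> \<gamma> b" using WS by (simp add: well_structured_def mono_def)
lemma galois: "R \<subseteq> Dens n \<Longrightarrow> R \<subseteq> \<gamma> a \<longleftrightarrow> \<alpha> R \<le> a" using WS by (simp add: well_structured_def)
lemma ag: "\<alpha> (\<gamma> a) = a" using WS by (simp add: well_structured_def)
lemma condb:
  assumes "I \<noteq> {}" "\<forall>i\<in>I. \<rho> i \<in> Dens n \<and> x i > 0"
    "\<forall>a<2^n. \<forall>b<2^n. summable (\<lambda>i. if i \<in> I then complex_of_real (x i) * \<rho> i $$ (a,b) else 0)"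
    "msuminf (2^n) (\<lambda>i. if i \<in> I then complex_of_real (x i) \<cdot>\<^sub>m \<rho> i else 0\<^sub>m (2^n) (2^n)) \<in> Dens n"
  shows "\<alpha> {msuminf (2^n) (\<lambda>i. if i \<in> I then complex_of_real (x i) \<cdot>\<^sub>m \<rho> i else 0\<^sub>m (2^n) (2^n))}
            = (SUP i\<in>I. \<alpha> {\<rho> i})"
  using WS assms unfolding well_structured_def by blast

lemma alpha_UN:
  assumes "\<And>i. i \<in> I \<Longrightarrow> R i \<subseteq> Dens n"
  shows "\<alpha> (\<Union>i\<in>I. R i) = (SUP i\<in>I. \<alpha> (R i))"
proof (rule order.antisym)
  have U: "(\<Union>i\<in>I. R i) \<subseteq> Dens n" using assms by auto
  have "R i \<subseteq> \<gamma> (SUP i\<in>I. \<alpha> (R i))" if "i \<in> I" for i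
    by (subst galois[OF assms[OF that]]) (rule SUP_upper[OF that])
  then have "(\<Union>i\<in>I. R i) \<subseteq> \<gamma> (SUP i\<in>I. \<alpha> (R i))" by auto
  then show "\<alpha> (\<Union>i\<in>I. R i) \<le> (SUP i\<in>I. \<alpha> (R i))" using galois[OF U] by simp
  show "(SUP i\<in>I. \<alpha> (R i)) \<le> \<alpha> (\<Union>i\<in>I. R i)"
  proof (rule SUP_least)
    fix i assume "i \<in> I"
    show "\<alpha> (R i) \<le> \<alpha> (\<Union>i\<in>I. R i)" by (rule a_mono[OF _ U]) (use \<open>i \<in> I\<close> in blast)
  qed
qed

lemma alpha_sing: "R \<subseteq> Dens n \<Longrightarrow> \<alpha> R = (SUP \<rho>\<in>R. \<alpha> {\<rho>})"
  using alpha_UN[of R "\<lambda>\<rho>. {\<rho>}"] by auto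

lemma alpha_image: "cong n \<alpha> f \<Longrightarrow> R \<subseteq> Dens n \<Longrightarrow> \<alpha> (f ` R) = (SUP \<rho>\<in>R. \<alpha> {f \<rho>})"
  using alpha_sing[OF cong_dens, of \<alpha> f R] by (simp add: image_comp)

lemma cong_best: "cong n \<alpha> f \<Longrightarrow> R \<subseteq> Dens n \<Longrightarrow> \<alpha> (f ` R) = \<alpha> (f ` \<gamma> (\<alpha> R))"
  unfolding cong_def using g_dens ag by metis

lemma alpha_add:
  assumes A: "A \<in> Dens n" and B: "B \<in> Dens n" and AB: "A + B \<in> Dens n"
  shows "\<alpha> {A + B} = sup (\<alpha> {A}) (\<alpha> {B})"
proof -
  let ?D = "2^n::nat"
  define r where "r = (\<lambda>i::nat. if i = 0 then A else B)"
  define x where "x = (\<lambda>i::nat. 1::real)"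
  have cA: "A \<in> carrier_mat ?D ?D" and cB: "B \<in> carrier_mat ?D ?D"
    using A B by (auto dest!: dens_psd psd_carrier)
  have fin: "\<forall>k. k \<notin> {0,1} \<longrightarrow> (if k \<in> {0,1} then c k else 0) = 0" for c :: "nat \<Rightarrow> complex" by simp
  have sm: "\<forall>a<?D. \<forall>b<?D. summable (\<lambda>i. if i \<in> {0,1} then complex_of_real (x i) * r i $$ (a,b) else 0)"
    by (intro allI impI summable_finite[of "{0,1}"]) auto
  have eq: "msuminf ?D (\<lambda>i. if i \<in> {0,1} then complex_of_real (x i) \<cdot>\<^sub>m r i else 0\<^sub>m ?D ?D) = A + B"
  proof (rule eq_matI)
    fix a b assume "a < dim_row (A + B)" "b < dim_col (A + B)"
    then have a: "a < ?D" and b: "b < ?D" using cB by auto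
    have "msuminf ?D (\<lambda>i. if i \<in> {0,1} then complex_of_real (x i) \<cdot>\<^sub>m r i else 0\<^sub>m ?D ?D) $$ (a,b)
        = (\<Sum>k. (if k \<in> {0,1} then complex_of_real (x k) \<cdot>\<^sub>m r k else 0\<^sub>m ?D ?D) $$ (a,b))"
      using a b by (simp add: msuminf_index)
    also have "\<dots> = (\<Sum>k\<in>{0,1}. (if k \<in> {0,1} then complex_of_real (x k) \<cdot>\<^sub>m r k else 0\<^sub>m ?D ?D) $$ (a,b))"
      by (rule suminf_finite) (use a b in auto)
    also have "\<dots> = A $$ (a,b) + B $$ (a,b)"
      using a b cA cB by (simp add: r_def x_def)
    also have "\<dots> = (A + B) $$ (a,b)" using a b cB by simp
    finally show "msuminf ?D (\<lambda>i. if i \<in> {0,1} then complex_of_real (x i) \<cdot>\<^sub>m r i else 0\<^sub>m ?D ?D) $$ (a,b) = (A + B) $$ (a,b)" .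
  qed (use cB in \<open>auto simp: msuminf_def\<close>)
  have "\<alpha> {msuminf ?D (\<lambda>i. if i \<in> {0,1} then complex_of_real (x i) \<cdot>\<^sub>m r i else 0\<^sub>m ?D ?D)} = (SUP i\<in>{0,1}. \<alpha> {r i})"
    by (rule condb) (use A B sm eq AB in \<open>auto simp: r_def x_def\<close>)
  then show ?thesis using eq by (simp add: r_def)
qed

lemma alpha_series:
  assumes D: "\<forall>i. r i \<in> Dens n"
    and sm: "\<forall>a<2^n. \<forall>b<2^n. summable (\<lambda>i. r i $$ (a,b))"
    and M: "msuminf (2^n) r \<in> Dens n"
  shows "\<alpha> {msuminf (2^n) r} = (SUP i. \<alpha> {r i})"
proof -
  let ?D = "2^n::nat"
  have c: "r i \<in> carrier_mat ?D ?D" for i using D by (auto dest!: dens_psd psd_carrier)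
  have eq: "msuminf ?D (\<lambda>i. if i \<in> UNIV then complex_of_real 1 \<cdot>\<^sub>m r i else 0\<^sub>m ?D ?D) = msuminf ?D r"
  proof -
    have e: "(1 \<cdot>\<^sub>m r k) $$ (i,j) = r k $$ (i,j)" if "i < ?D" "j < ?D" for k i j
      using c[of k] that by (metis carrier_matD(1) carrier_matD(2) index_smult_mat(1) mult_1)
    show ?thesis unfolding msuminf_def by (rule eq_matI) (simp_all add: e)
  qed
  have "\<alpha> {msuminf ?D (\<lambda>i. if i \<in> UNIV then complex_of_real ((\<lambda>_. 1) i) \<cdot>\<^sub>m r i else 0\<^sub>m ?D ?D)} = (SUP i\<in>UNIV. \<alpha> {r i})"
    by (rule condb) (use D sm eq M c in auto)
  then show ?thesis using eq by simp
qed

end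


context
  fixes n :: nat and \<alpha> :: "complex mat set \<Rightarrow> 'a::complete_lattice" and \<gamma> :: "'a \<Rightarrow> complex mat set"
    and absop :: "prog \<Rightarrow> 'a \<Rightarrow> 'a"
  assumes WS: "well_structured n \<alpha> \<gamma>"
    and CA: "\<And>e. basic e \<Longrightarrow> wf_prog n e \<Longrightarrow> complete_abs n \<alpha> e (absop e)"
begin

lemma basic_cong:
  assumes "basic e" "wf_prog n e" shows "cong n \<alpha> (sem n e)"
proof -
  have ca: "\<alpha> (sem n e ` R) = absop e (\<alpha> R)" if "R \<subseteq> Dens n" for R
    using CA[OF assms] that by (simp add: complete_abs_def semQ_def)
  have "\<alpha> (sem n e ` R1) = \<alpha> (sem n e ` R2)" if "R1 \<subseteq> Dens n" "R2 \<subseteq> Dens n" "\<alpha> R1 = \<alpha> R2" for R1 R2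
    using ca[OF that(1)] ca[OF that(2)] that(3) by simp
  then show ?thesis unfolding cong_def using sem_dens[OF assms(2)] by blast
qed

lemma alpha_if:
  assumes g: "cong n \<alpha> g" and h: "cong n \<alpha> h" and D: "\<forall>\<rho>\<in>Dens n. g \<rho> + h \<rho> \<in> Dens n"
    and R: "R \<subseteq> Dens n"
  shows "\<alpha> ((\<lambda>\<rho>. g \<rho> + h \<rho>) ` R) = sup (\<alpha> (g ` R)) (\<alpha> (h ` R))"
proof -
  have c: "cong n \<alpha> (\<lambda>\<rho>. g \<rho> + h \<rho>) \<or> True" by simp
  have "(\<lambda>\<rho>. g \<rho> + h \<rho>) ` R \<subseteq> Dens n" using D R by auto
  then have "\<alpha> ((\<lambda>\<rho>. g \<rho> + h \<rho>) ` R) = (SUP \<rho>\<in>R. \<alpha> {g \<rho> + h \<rho>})"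
    using alpha_sing[OF WS] by (simp add: image_comp)
  also have "\<dots> = (SUP \<rho>\<in>R. sup (\<alpha> {g \<rho>}) (\<alpha> {h \<rho>}))"
  proof (rule SUP_cong[OF refl])
    fix \<rho> assume "\<rho> \<in> R"
    then have "\<rho> \<in> Dens n" using R by auto
    then have gD: "g \<rho> \<in> Dens n" and hD: "h \<rho> \<in> Dens n" and sD: "g \<rho> + h \<rho> \<in> Dens n"
      using g h D unfolding cong_def by auto
    show "\<alpha> {g \<rho> + h \<rho>} = sup (\<alpha> {g \<rho>}) (\<alpha> {h \<rho>})"
      by (rule alpha_add[OF WS gD hD sD])
  qed
  also have "\<dots> = sup (SUP \<rho>\<in>R. \<alpha> {g \<rho>}) (SUP \<rho>\<in>R. \<alpha> {h \<rho>})"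
    by (rule Complete_Lattices.SUP_sup_distrib[symmetric])
  also have "\<dots> = sup (\<alpha> (g ` R)) (\<alpha> (h ` R))"
    using alpha_image[OF WS g R] alpha_image[OF WS h R] by simp
  finally show ?thesis .
qed

lemma cong_if:
  assumes g: "cong n \<alpha> g" and h: "cong n \<alpha> h" and D: "\<forall>\<rho>\<in>Dens n. g \<rho> + h \<rho> \<in> Dens n"
  shows "cong n \<alpha> (\<lambda>\<rho>. g \<rho> + h \<rho>)"
proof -
  have "\<alpha> ((\<lambda>\<rho>. g \<rho> + h \<rho>) ` R1) = \<alpha> ((\<lambda>\<rho>. g \<rho> + h \<rho>) ` R2)"
    if "R1 \<subseteq> Dens n" "R2 \<subseteq> Dens n" "\<alpha> R1 = \<alpha> R2" for R1 R2
  proof -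
    have "\<alpha> (g ` R1) = \<alpha> (g ` R2)" "\<alpha> (h ` R1) = \<alpha> (h ` R2)"
      using g h that unfolding cong_def by blast+
    then show ?thesis using alpha_if[OF g h D that(1)] alpha_if[OF g h D that(2)] by simp
  qed
  then show ?thesis unfolding cong_def using D by blast
qed

lemma alpha_while:
  assumes T: "\<And>i. cong n \<alpha> (T i)"
    and D: "\<forall>\<rho>\<in>Dens n. (\<forall>a<2^n. \<forall>b<2^n. summable (\<lambda>i. T i \<rho> $$ (a,b))) \<and> msuminf (2^n) (\<lambda>i. T i \<rho>) \<in> Dens n"
    and R: "R \<subseteq> Dens n"
  shows "\<alpha> ((\<lambda>\<rho>. msuminf (2^n) (\<lambda>i. T i \<rho>)) ` R) = (SUP i. \<alpha> (T i ` R))"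
proof -
  have "(\<lambda>\<rho>. msuminf (2^n) (\<lambda>i. T i \<rho>)) ` R \<subseteq> Dens n" using D R by auto
  then have "\<alpha> ((\<lambda>\<rho>. msuminf (2^n) (\<lambda>i. T i \<rho>)) ` R) = (SUP \<rho>\<in>R. \<alpha> {msuminf (2^n) (\<lambda>i. T i \<rho>)})"
    using alpha_sing[OF WS] by (simp add: image_comp)
  also have "\<dots> = (SUP \<rho>\<in>R. SUP i. \<alpha> {T i \<rho>})"
  proof (rule SUP_cong[OF refl])
    fix \<rho> assume "\<rho> \<in> R"
    then have r: "\<rho> \<in> Dens n" using R by auto
    have TD: "\<forall>i. T i \<rho> \<in> Dens n" using T r unfolding cong_def by blast
    have sm: "\<forall>a<2^n. \<forall>b<2^n. summable (\<lambda>i. T i \<rho> $$ (a,b))" and MD: "msuminf (2^n) (\<lambda>i. T i \<rho>) \<in> Dens n"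
      using D r by auto
    show "\<alpha> {msuminf (2^n) (\<lambda>i. T i \<rho>)} = (SUP i. \<alpha> {T i \<rho>})"
      by (rule alpha_series[OF WS TD sm MD])
  qed
  also have "\<dots> = (SUP i. SUP \<rho>\<in>R. \<alpha> {T i \<rho>})" by (rule SUP_commute)
  also have "\<dots> = (SUP i. \<alpha> (T i ` R))"
    using alpha_image[OF WS T R] by simp
  finally show ?thesis .
qed

lemma cong_while:
  assumes T: "\<And>i. cong n \<alpha> (T i)"
    and D: "\<forall>\<rho>\<in>Dens n. (\<forall>a<2^n. \<forall>b<2^n. summable (\<lambda>i. T i \<rho> $$ (a,b))) \<and> msuminf (2^n) (\<lambda>i. T i \<rho>) \<in> Dens n"
  shows "cong n \<alpha> (\<lambda>\<rho>. msuminf (2^n) (\<lambda>i. T i \<rho>))"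
proof -
  have "\<alpha> ((\<lambda>\<rho>. msuminf (2^n) (\<lambda>i. T i \<rho>)) ` R1) = \<alpha> ((\<lambda>\<rho>. msuminf (2^n) (\<lambda>i. T i \<rho>)) ` R2)"
    if "R1 \<subseteq> Dens n" "R2 \<subseteq> Dens n" "\<alpha> R1 = \<alpha> R2" for R1 R2
  proof -
    have "\<alpha> (T i ` R1) = \<alpha> (T i ` R2)" for i
      using T[of i] that unfolding cong_def by blast
    then show ?thesis using alpha_while[OF T D that(1)] alpha_while[OF T D that(2)] by simp
  qed
  then show ?thesis unfolding cong_def using D by blast
qed

lemma sem_seq_fun: "sem n (Seq S0 S1) = sem n S1 \<circ> sem n S0"
  by (rule ext) simp

lemma body_fun: "(\<lambda>\<sigma>. sem n S (assert_op n qs P \<sigma>)) = sem n (Seq (Assert qs P) S)"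
  by (rule ext) simp

lemma sem_if_fun: "sem n (If qs P S1 S0) = (\<lambda>\<rho>. sem n (Seq (Assert qs P) S1) \<rho> + sem n (Seq (Assert qs (perp qs P)) S0) \<rho>)"
  by (rule ext) simp

lemma sem_while_fun: "sem n (While qs P S) = (\<lambda>\<rho>. msuminf (2^n) (\<lambda>i. (sem n (Assert qs (perp qs P)) \<circ> (sem n (Seq (Assert qs P) S) ^^ i)) \<rho>))"
  by (rule ext) (simp add: body_fun[symmetric])

lemma prog_cong: "wf_prog n S \<Longrightarrow> cong n \<alpha> (sem n S)"
proof (induction S)
  case Skip then show ?case by (intro basic_cong) auto
next
  case (Init qs) then show ?case by (intro basic_cong) auto
next
  case (Unit qs U) then show ?case by (intro basic_cong) auto
next
  case (Assert qs P) then show ?case by (intro basic_cong) auto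
next
  case (Seq S0 S1) then show ?case unfolding sem_seq_fun by (intro cong_comp) auto
next
  case (If qs P S1 S0)
  have wA: "wf_prog n (Assert qs P)" and wA': "wf_prog n (Assert qs (perp qs P))"
    using If by (auto intro: projector_perp)
  have g: "cong n \<alpha> (sem n (Seq (Assert qs P) S1))"
    unfolding sem_seq_fun using If basic_cong[OF _ wA] by (intro cong_comp) auto
  have h: "cong n \<alpha> (sem n (Seq (Assert qs (perp qs P)) S0))"
    unfolding sem_seq_fun using If basic_cong[OF _ wA'] by (intro cong_comp) auto
  have D: "\<forall>\<rho>\<in>Dens n. sem n (Seq (Assert qs P) S1) \<rho> + sem n (Seq (Assert qs (perp qs P)) S0) \<rho> \<in> Dens n"
    using sem_dens[OF If(3)] by simp
  show ?case unfolding sem_if_fun by (rule cong_if[OF g h D])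
next
  case (While qs P S)
  have wA: "wf_prog n (Assert qs P)" and wA': "wf_prog n (Assert qs (perp qs P))"
    using While by (auto intro: projector_perp)
  have g: "cong n \<alpha> (sem n (Seq (Assert qs P) S))"
    unfolding sem_seq_fun using While basic_cong[OF _ wA] by (intro cong_comp) auto
  have f0: "cong n \<alpha> (sem n (Assert qs (perp qs P)))" by (rule basic_cong[OF _ wA']) simp
  have T: "cong n \<alpha> (sem n (Assert qs (perp qs P)) \<circ> (sem n (Seq (Assert qs P) S) ^^ i))" for i
    by (rule cong_comp[OF cong_pow[OF g] f0])
  have D: "\<forall>\<rho>\<in>Dens n. (\<forall>a<2^n. \<forall>b<2^n. summable (\<lambda>i. (sem n (Assert qs (perp qs P)) \<circ> (sem n (Seq (Assert qs P) S) ^^ i)) \<rho> $$ (a,b)))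
       \<and> msuminf (2^n) (\<lambda>i. (sem n (Assert qs (perp qs P)) \<circ> (sem n (Seq (Assert qs P) S) ^^ i)) \<rho>) \<in> Dens n"
  proof
    fix \<rho> assume r: "\<rho> \<in> Dens n"
    have "sem n (While qs P S) \<rho> \<in> Dens n" by (rule sem_dens[OF While(2) r])
    moreover note while_summable[OF While(2) dens_psd[OF r]]
    ultimately show "(\<forall>a<2^n. \<forall>b<2^n. summable (\<lambda>i. (sem n (Assert qs (perp qs P)) \<circ> (sem n (Seq (Assert qs P) S) ^^ i)) \<rho> $$ (a,b)))
       \<and> msuminf (2^n) (\<lambda>i. (sem n (Assert qs (perp qs P)) \<circ> (sem n (Seq (Assert qs P) S) ^^ i)) \<rho>) \<in> Dens n"
      by (simp add: body_fun)
  qed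
  show ?case unfolding sem_while_fun by (rule cong_while[OF T D])
qed

end


context
  fixes n :: nat and \<alpha> :: "complex mat set \<Rightarrow> 'a::complete_lattice" and \<gamma> :: "'a \<Rightarrow> complex mat set"
    and absop :: "prog \<Rightarrow> 'a \<Rightarrow> 'a"
  assumes WS: "well_structured n \<alpha> \<gamma>"
    and CA: "\<And>e. basic e \<Longrightarrow> wf_prog n e \<Longrightarrow> complete_abs n \<alpha> e (absop e)"
begin

abbreviation "B \<equiv> best_abs n \<alpha> \<gamma>"

lemma pc: "wf_prog n S \<Longrightarrow> cong n \<alpha> (sem n S)"
  by (rule prog_cong[OF WS CA])

lemma best_eq:
  assumes "wf_prog n S" "R \<subseteq> Dens n"
  shows "\<alpha> (sem n S ` R) = B S (\<alpha> R)"
  unfolding best_abs_def semQ_def using cong_best[OF WS pc[OF assms(1)] assms(2)] by simp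

lemma best_mono:
  assumes "wf_prog n S" "a \<le> b"
  shows "B S a \<le> B S b"
proof -
  have "sem n S ` \<gamma> a \<subseteq> sem n S ` \<gamma> b" using g_mono[OF WS assms(2)] by auto
  moreover have "sem n S ` \<gamma> b \<subseteq> Dens n" using cong_dens[OF pc[OF assms(1)] g_dens[OF WS]] .
  ultimately show ?thesis unfolding best_abs_def semQ_def by (rule a_mono[OF WS])
qed

lemma best_basic:
  assumes "basic e" "wf_prog n e"
  shows "B e a = absop e a"
  using CA[OF assms] g_dens[OF WS, of a] ag[OF WS, of a]
  unfolding best_abs_def complete_abs_def by metis

lemma best_seq:
  assumes "wf_prog n S0" "wf_prog n S1"
  shows "B (Seq S0 S1) a = B S1 (B S0 a)"
proof -
  have D: "sem n S0 ` \<gamma> a \<subseteq> Dens n" using cong_dens[OF pc[OF assms(1)] g_dens[OF WS]] .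
  have "B (Seq S0 S1) a = \<alpha> (sem n S1 ` sem n S0 ` \<gamma> a)"
    unfolding best_abs_def semQ_def by (simp add: image_image)
  also have "\<dots> = B S1 (\<alpha> (sem n S0 ` \<gamma> a))" by (rule best_eq[OF assms(2) D])
  also have "\<alpha> (sem n S0 ` \<gamma> a) = B S0 a" unfolding best_abs_def semQ_def ..
  finally show ?thesis .
qed

lemma best_if:
  assumes "wf_prog n (If qs P S1 S0)"
  shows "B (If qs P S1 S0) a = sup (B (Seq (Assert qs P) S1) a) (B (Seq (Assert qs (perp qs P)) S0) a)"
proof -
  have w1: "wf_prog n (Seq (Assert qs P) S1)" and w0: "wf_prog n (Seq (Assert qs (perp qs P)) S0)"
    using assms by (auto intro: projector_perp)
  have D: "\<forall>\<rho>\<in>Dens n. sem n (Seq (Assert qs P) S1) \<rho> + sem n (Seq (Assert qs (perp qs P)) S0) \<rho> \<in> Dens n"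
    using sem_dens[OF assms] by simp
  have "B (If qs P S1 S0) a = \<alpha> ((\<lambda>\<rho>. sem n (Seq (Assert qs P) S1) \<rho> + sem n (Seq (Assert qs (perp qs P)) S0) \<rho>) ` \<gamma> a)"
    unfolding best_abs_def semQ_def by (intro arg_cong[where f=\<alpha>] image_cong refl) simp
  also have "\<dots> = sup (\<alpha> (sem n (Seq (Assert qs P) S1) ` \<gamma> a)) (\<alpha> (sem n (Seq (Assert qs (perp qs P)) S0) ` \<gamma> a))"
    by (rule alpha_if[OF WS CA pc[OF w1] pc[OF w0] D g_dens[OF WS]])
  finally show ?thesis unfolding best_abs_def semQ_def .
qed

lemma best_while:
  assumes w: "wf_prog n (While qs P S)"
  shows "B (While qs P S) a = (SUP i. B (Assert qs (perp qs P)) ((B (Seq (Assert qs P) S) ^^ i) a))"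
proof -
  let ?g = "sem n (Seq (Assert qs P) S)" and ?f0 = "sem n (Assert qs (perp qs P))"
  have wg: "wf_prog n (Seq (Assert qs P) S)" and wf0: "wf_prog n (Assert qs (perp qs P))"
    using assms by (auto intro: projector_perp)
  have g: "cong n \<alpha> ?g" and f0: "cong n \<alpha> ?f0" using pc wg wf0 by auto
  have T: "cong n \<alpha> (?f0 \<circ> (?g ^^ i))" for i by (rule cong_comp[OF cong_pow[OF g] f0])
  have D: "\<forall>\<rho>\<in>Dens n. (\<forall>a<2^n. \<forall>b<2^n. summable (\<lambda>i. (?f0 \<circ> (?g ^^ i)) \<rho> $$ (a,b)))
       \<and> msuminf (2^n) (\<lambda>i. (?f0 \<circ> (?g ^^ i)) \<rho>) \<in> Dens n"
  proof
    fix \<rho> assume r: "\<rho> \<in> Dens n"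
    have "sem n (While qs P S) \<rho> \<in> Dens n" by (rule sem_dens[OF w r])
    moreover note while_summable[OF w dens_psd[OF r]]
    ultimately show "(\<forall>a<2^n. \<forall>b<2^n. summable (\<lambda>i. (?f0 \<circ> (?g ^^ i)) \<rho> $$ (a,b)))
       \<and> msuminf (2^n) (\<lambda>i. (?f0 \<circ> (?g ^^ i)) \<rho>) \<in> Dens n"
      by (simp add: body_fun[OF WS CA])
  qed
  have pw: "\<alpha> ((?g ^^ i) ` R) = (B (Seq (Assert qs P) S) ^^ i) (\<alpha> R)" if R: "R \<subseteq> Dens n" for i R
  proof (induction i)
    case 0 then show ?case by simp
  next
    case (Suc i)
    have D': "(?g ^^ i) ` R \<subseteq> Dens n" by (rule cong_dens[OF cong_pow[OF g] R])
    have "(?g ^^ Suc i) ` R = ?g ` (?g ^^ i) ` R" by (simp only: funpow.simps(2) image_comp)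
    then have "\<alpha> ((?g ^^ Suc i) ` R) = B (Seq (Assert qs P) S) (\<alpha> ((?g ^^ i) ` R))"
      using best_eq[OF wg D'] by (simp only:)
    also have "\<dots> = B (Seq (Assert qs P) S) ((B (Seq (Assert qs P) S) ^^ i) (\<alpha> R))"
      by (simp only: Suc.IH)
    also have "\<dots> = (B (Seq (Assert qs P) S) ^^ Suc i) (\<alpha> R)" by simp
    finally show ?case .
  qed
  have "B (While qs P S) a = \<alpha> ((\<lambda>\<rho>. msuminf (2^n) (\<lambda>i. (?f0 \<circ> (?g ^^ i)) \<rho>)) ` \<gamma> a)"
    unfolding best_abs_def semQ_def by (intro arg_cong[where f=\<alpha>] image_cong refl) (simp add: body_fun[OF WS CA])
  also have "\<dots> = (SUP i. \<alpha> ((?f0 \<circ> (?g ^^ i)) ` \<gamma> a))"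
    by (rule alpha_while[OF WS CA T D g_dens[OF WS]])
  also have "\<dots> = (SUP i. B (Assert qs (perp qs P)) ((B (Seq (Assert qs P) S) ^^ i) a))"
  proof (rule SUP_cong[OF refl])
    fix i
    have D': "(?g ^^ i) ` \<gamma> a \<subseteq> Dens n" by (rule cong_dens[OF cong_pow[OF g] g_dens[OF WS]])
    have "\<alpha> ((?f0 \<circ> (?g ^^ i)) ` \<gamma> a) = \<alpha> (?f0 ` (?g ^^ i) ` \<gamma> a)" by (simp add: image_comp)
    also have "\<dots> = B (Assert qs (perp qs P)) (\<alpha> ((?g ^^ i) ` \<gamma> a))" by (rule best_eq[OF wf0 D'])
    also have "\<alpha> ((?g ^^ i) ` \<gamma> a) = (B (Seq (Assert qs P) S) ^^ i) a"
      using pw[OF g_dens[OF WS]] ag[OF WS] by simp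
    finally show "\<alpha> ((?f0 \<circ> (?g ^^ i)) ` \<gamma> a) = B (Assert qs (perp qs P)) ((B (Seq (Assert qs P) S) ^^ i) a)" .
  qed
  finally show ?thesis .
qed

end

theorem mainTheorem10:
  fixes n :: nat
    and \<alpha> :: "complex mat set \<Rightarrow> 'a::complete_lattice"
    and \<gamma> :: "'a \<Rightarrow> complex mat set"
    and absop :: "prog \<Rightarrow> 'a \<Rightarrow> 'a"
  assumes "well_structured n \<alpha> \<gamma>"
    and "\<And>e. basic e \<Longrightarrow> wf_prog n e \<Longrightarrow> mono (absop e)"
    and "\<And>e. basic e \<Longrightarrow> wf_prog n e \<Longrightarrow> complete_abs n \<alpha> e (absop e)"
  shows "\<forall>S a b. wf_prog n S \<longrightarrow> (derivable_in absop a S b \<longleftrightarrow> valid_in n \<alpha> \<gamma> a S b)"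
proof -
  note WS = assms(1) and CA = assms(3)
  let ?B = "best_abs n \<alpha> \<gamma>"
  have sound: "b \<le> ?B S a" if "derivable_in absop a S b" "wf_prog n S" for a S b
    using that
  proof (induction rule: derivable_in.induct)
    case (ExpIn e a)
    then show ?case using best_basic[OF WS CA] by simp
  next
    case (SeqIn a S0 a' S1 b)
    have w0: "wf_prog n S0" and w1: "wf_prog n S1" using SeqIn by auto
    have "b \<le> ?B S1 a'" using SeqIn w1 by auto
    also have "\<dots> \<le> ?B S1 (?B S0 a)" using SeqIn w0 best_mono[OF WS CA w1] by auto
    also have "\<dots> = ?B (Seq S0 S1) a" using best_seq[OF WS CA w0 w1] by simp
    finally show ?case .
  next
    case (ImpIn a' a S b' b)
    then show ?case using best_mono[OF WS CA, of S a' a] by (meson order_trans)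
  next
    case (MeasIn a qs P S1 b1 S0 b0)
    have w1: "wf_prog n (Seq (Assert qs P) S1)" and w0: "wf_prog n (Seq (Assert qs (perp qs P)) S0)"
      using MeasIn by (auto intro: projector_perp)
    have i1: "b1 \<le> ?B (Seq (Assert qs P) S1) a" and i0: "b0 \<le> ?B (Seq (Assert qs (perp qs P)) S0) a"
      using MeasIn w1 w0 by auto
    have "sup b0 b1 \<le> sup (?B (Seq (Assert qs P) S1) a) (?B (Seq (Assert qs (perp qs P)) S0) a)"
      by (rule sup_least[OF le_supI2[OF i0] le_supI1[OF i1]])
    then show ?case using best_if[OF WS CA MeasIn(5), of a] by simp
  next
    case (WhileIn as qs P S bs)
    let ?g = "?B (Seq (Assert qs P) S)" and ?f = "?B (Assert qs (perp qs P))"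
    have wg: "wf_prog n (Seq (Assert qs P) S)" and wf0: "wf_prog n (Assert qs (perp qs P))"
      using WhileIn by (auto intro: projector_perp)
    have h1: "as (Suc i) \<le> ?g (as i)" and h2: "bs i \<le> ?f (as i)" for i
      using WhileIn wg wf0 by auto
    have ai: "as i \<le> (?g ^^ i) (as 0)" for i
    proof (induction i)
      case 0 then show ?case by simp
    next
      case (Suc i)
      have "as (Suc i) \<le> ?g (as i)" by (rule h1)
      also have "\<dots> \<le> ?g ((?g ^^ i) (as 0))" by (rule best_mono[OF WS CA wg Suc.IH])
      finally show ?case by simp
    qed
    have "bs i \<le> ?f ((?g ^^ i) (as 0))" for i
      using h2[of i] best_mono[OF WS CA wf0 ai[of i]] by (rule order_trans)
    then have "(SUP i. bs i) \<le> (SUP i. ?f ((?g ^^ i) (as 0)))" by (rule SUP_mono') 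
    then show ?case using best_while[OF WS CA WhileIn(2)] by simp
  qed
  have compl: "derivable_in absop a S (?B S a)" if "wf_prog n S" for S a
    using that
  proof (induction S arbitrary: a)
    case Skip then show ?case using best_basic[OF WS CA, of Skip] derivable_in.ExpIn[of Skip absop a] by simp
  next
    case (Init qs) then show ?case using best_basic[OF WS CA, of "Init qs"] derivable_in.ExpIn[of "Init qs" absop a] by simp
  next
    case (Unit qs U) then show ?case using best_basic[OF WS CA, of "Unit qs U"] derivable_in.ExpIn[of "Unit qs U" absop a] by simp
  next
    case (Assert qs P) then show ?case using best_basic[OF WS CA, of "Assert qs P"] derivable_in.ExpIn[of "Assert qs P" absop a] by simp
  next
    case (Seq S0 S1)
    have w0: "wf_prog n S0" and w1: "wf_prog n S1" using Seq by auto
    have "derivable_in absop a (Seq S0 S1) (?B S1 (?B S0 a))"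
      by (rule derivable_in.SeqIn[OF Seq.IH(1)[OF w0] Seq.IH(2)[OF w1]])
    then show ?case using best_seq[OF WS CA w0 w1] by simp
  next
    case (If qs P S1 S0)
    have wA: "wf_prog n (Assert qs P)" and wA': "wf_prog n (Assert qs (perp qs P))"
      and w1: "wf_prog n S1" and w0: "wf_prog n S0"
      using If by (auto intro: projector_perp)
    have d1: "derivable_in absop a (Seq (Assert qs P) S1) (?B (Seq (Assert qs P) S1) a)"
    proof -
      have "derivable_in absop a (Seq (Assert qs P) S1) (?B S1 (absop (Assert qs P) a))"
        by (rule derivable_in.SeqIn[OF derivable_in.ExpIn If.IH(1)[OF w1]]) simp
      then show ?thesis using best_seq[OF WS CA wA w1] best_basic[OF WS CA _ wA] by simp
    qed
    have d0: "derivable_in absop a (Seq (Assert qs (perp qs P)) S0) (?B (Seq (Assert qs (perp qs P)) S0) a)"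
    proof -
      have "derivable_in absop a (Seq (Assert qs (perp qs P)) S0) (?B S0 (absop (Assert qs (perp qs P)) a))"
        by (rule derivable_in.SeqIn[OF derivable_in.ExpIn If.IH(2)[OF w0]]) simp
      then show ?thesis using best_seq[OF WS CA wA' w0] best_basic[OF WS CA _ wA'] by simp
    qed
    show ?case using derivable_in.MeasIn[OF d1 d0] best_if[OF WS CA If(3)] by (simp add: sup_commute)
  next
    case (While qs P S)
    have wA: "wf_prog n (Assert qs P)" and wA': "wf_prog n (Assert qs (perp qs P))"
      and w: "wf_prog n S"
      using While by (auto intro: projector_perp)
    let ?g = "?B (Seq (Assert qs P) S)" and ?f = "?B (Assert qs (perp qs P))"
    define as where "as i = (?g ^^ i) a" for i
    define bs where "bs i = ?f (as i)" for i
    have step: "derivable_in absop c (Seq (Assert qs P) S) (?g c)" for c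
    proof -
      have "derivable_in absop c (Seq (Assert qs P) S) (?B S (absop (Assert qs P) c))"
        by (rule derivable_in.SeqIn[OF derivable_in.ExpIn While.IH[OF w]]) simp
      then show ?thesis using best_seq[OF WS CA wA w] best_basic[OF WS CA _ wA] by simp
    qed
    have ex: "derivable_in absop c (Assert qs (perp qs P)) (?f c)" for c
      using derivable_in.ExpIn[of "Assert qs (perp qs P)" absop c] best_basic[OF WS CA _ wA'] by simp
    have "\<forall>i. derivable_in absop (as i) (Seq (Assert qs P) S) (as (Suc i)) \<and>
                derivable_in absop (as i) (Assert qs (perp qs P)) (bs i)"
      using step ex by (simp add: as_def bs_def)
    then have "derivable_in absop (as 0) (While qs P S) (SUP i. bs i)" by (rule derivable_in.WhileIn)
    then show ?case using best_while[OF WS CA While(2)] by (simp add: as_def bs_def)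
  qed
  show ?thesis
  proof (intro allI impI iffI)
    fix S a b assume w: "wf_prog n S"
    { assume "derivable_in absop a S b" then show "valid_in n \<alpha> \<gamma> a S b"
        using sound w by (simp add: valid_in_def) }
    { assume "valid_in n \<alpha> \<gamma> a S b" then show "derivable_in absop a S b"
        using derivable_in.ImpIn[OF order.refl compl[OF w]] by (simp add: valid_in_def) }
  qed
qed


end
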